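(* Let $m\in\mathbb{N}$ and $\rho\in[2,m-1]$. Then $$t_\rho(\mathbb{Z}_m)=\left\lfloor\frac{m-2}{\rho-1}\right\rfloor+1,\qquad s_\rho(\mathbb{Z}_m)=\max\left\{\frac md\left(\left\lfloor\frac{d-2}{\rho-1}\right\rfloor+1\right): d\mid m,\ d\ge\rho+1\right\}.$$
   Context: Groups are written additively; $\mathbb{Z}_m=\mathbb{Z}/m\mathbb{Z}$. For $A\subseteq G$ let $A_0:=A\cup\{0\}$ and $\langle A\rangle^+_\rho:=\rho A_0=\{a_1+\dots+a_\rho:a_i\in A_0\}$. $\operatorname{diam}^+_A(G):=\min\{\rho\in\mathbb{N}_0:\langle A\rangle^+_\rho=G\}$ ($\min\varnothing=\infty$). The period of $S\subseteq G$ is $\pi(S):=\{g\in G:S+g=S\}$; $S$ is aperiodic if $\pi(S)=\{0\}$. A subset $A\subseteq G$ is $\rho$-maximal if it is maximal under inclusion subject to $\operatorname{diam}^+_A(G)\ge\rho$, i.e. subject to $\langle A\rangle^+_{\rho-1}\neq G$. With the convention $\max\varnothing=0$: $s_\rho(G):=\max\{|A|: A\subseteq G,\ \rho\le\operatorname{diam}^+_A(G)<\infty\}$ and $t_\rho(G):=\max\{|A|: A \text{ is an aperiodic } \rho\text{-maximal generating set for } G\}$. *)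

theory Defs
  imports Main "HOL-Library.Extended_Nat"
begin

text \<open>The cyclic group Z_m is modelled by the carrier {0..<m} of naturals with
addition modulo m.\<close>

definition Zm :: "nat \<Rightarrow> nat set" where
  "Zm m = {0..<m}"

fun sumset_rho :: "nat \<Rightarrow> nat set \<Rightarrow> nat \<Rightarrow> nat set" where
  "sumset_rho m A 0 = {0 mod m}"
| "sumset_rho m A (Suc r) = {(x + a) mod m | x a. x \<in> sumset_rho m A r \<and> a \<in> insert 0 A}"

definition diam :: "nat \<Rightarrow> nat set \<Rightarrow> enat" where
  "diam m A = (if \<exists>r. sumset_rho m A r = Zm m
               then enat (LEAST r. sumset_rho m A r = Zm m) else \<infinity>)"

definition period :: "nat \<Rightarrow> nat set \<Rightarrow> nat set" where
  "period m S = {g \<in> Zm m. (\<lambda>x. (x + g) mod m) ` S = S}"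

definition aperiodic :: "nat \<Rightarrow> nat set \<Rightarrow> bool" where
  "aperiodic m S \<longleftrightarrow> period m S = {0}"

definition rho_maximal :: "nat \<Rightarrow> nat \<Rightarrow> nat set \<Rightarrow> bool" where
  "rho_maximal m \<rho> A \<longleftrightarrow> A \<subseteq> Zm m \<and> enat \<rho> \<le> diam m A \<and>
     (\<forall>B. A \<subset> B \<and> B \<subseteq> Zm m \<longrightarrow> \<not> (enat \<rho> \<le> diam m B))"

definition generates :: "nat \<Rightarrow> nat set \<Rightarrow> bool" where
  "generates m A \<longleftrightarrow> A \<subseteq> Zm m \<and>
     (\<forall>H. H \<subseteq> Zm m \<and> 0 \<in> H \<and> (\<forall>x\<in>H. \<forall>y\<in>H. (x + y) mod m \<in> H)
          \<and> (\<forall>x\<in>H. (m - x) mod m \<in> H) \<and> A \<subseteq> H \<longrightarrow> H = Zm m)"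

text \<open>max over the empty set is 0 (cardinalities are \<ge> 0, so insert 0).\<close>
definition s_rho :: "nat \<Rightarrow> nat \<Rightarrow> nat" where
  "s_rho \<rho> m = Max (insert 0 {card A | A. A \<subseteq> Zm m \<and> enat \<rho> \<le> diam m A \<and> diam m A < \<infinity>})"

definition t_rho :: "nat \<Rightarrow> nat \<Rightarrow> nat" where
  "t_rho \<rho> m = Max (insert 0 {card A | A. A \<subseteq> Zm m \<and> aperiodic m A \<and> rho_maximal m \<rho> A
                                          \<and> generates m A})"

end

theory Submission
  imports Defs
begin


section \<open>Sumsets in abelian groups\<close>

definition sp :: "'a::ab_group_add set \<Rightarrow> 'a set \<Rightarrow> 'a set" (infixl "\<oplus>" 65)
  where "A \<oplus> B = {a + b | a b. a \<in> A \<and> b \<in> B}"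

definition stab :: "'a::ab_group_add set \<Rightarrow> 'a set"
  where "stab S = {g. (+) g ` S = S}"

definition sg :: "'a::ab_group_add set \<Rightarrow> bool"
  where "sg H \<longleftrightarrow> 0 \<in> H \<and> (\<forall>x\<in>H. \<forall>y\<in>H. x + y \<in> H) \<and> (\<forall>x\<in>H. - x \<in> H)"

definition cs :: "'a::ab_group_add \<Rightarrow> 'a set \<Rightarrow> 'a set"
  where "cs x H = (+) x ` H"

lemma sp_iff: "z \<in> A \<oplus> B \<longleftrightarrow> (\<exists>a\<in>A. \<exists>b\<in>B. z = a + b)"
  unfolding sp_def by blast

lemma sp_I[intro]: "a \<in> A \<Longrightarrow> b \<in> B \<Longrightarrow> a + b \<in> A \<oplus> B"
  unfolding sp_def by blast

lemma sp_E[elim]: "z \<in> A \<oplus> B \<Longrightarrow> (\<And>a b. a \<in> A \<Longrightarrow> b \<in> B \<Longrightarrow> z = a + b \<Longrightarrow> P) \<Longrightarrow> P"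
  unfolding sp_def by blast

lemma sp_image: "A \<oplus> B = (\<lambda>(a,b). a + b) ` (A \<times> B)"
  unfolding sp_def by auto

lemma sp_finite[simp]: "finite A \<Longrightarrow> finite B \<Longrightarrow> finite (A \<oplus> B)"
  unfolding sp_image by simp

lemma sp_empty[simp]: "A \<oplus> {} = {}" "{} \<oplus> B = {}"
  unfolding sp_def by auto

lemma sp_ne: "A \<noteq> {} \<Longrightarrow> B \<noteq> {} \<Longrightarrow> A \<oplus> B \<noteq> {}"
  unfolding sp_def by blast

lemma sp_comm_sub: "A \<oplus> B \<subseteq> B \<oplus> A"
proof
  fix z assume "z \<in> A \<oplus> B"
  then obtain a b where "a \<in> A" "b \<in> B" "z = a + b" by blast
  thus "z \<in> B \<oplus> A" using sp_I[of b B a A] by (simp add: add.commute)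
qed

lemma sp_comm: "A \<oplus> B = B \<oplus> A"
  using sp_comm_sub by blast

lemma sp_assoc: "(A \<oplus> B) \<oplus> C = A \<oplus> (B \<oplus> C)"
proof
  show "(A \<oplus> B) \<oplus> C \<subseteq> A \<oplus> (B \<oplus> C)"
  proof
    fix z assume "z \<in> (A \<oplus> B) \<oplus> C"
    then obtain u c a b where "u \<in> A \<oplus> B" "c \<in> C" "z = u + c" "a \<in> A" "b \<in> B" "u = a + b" by blast
    thus "z \<in> A \<oplus> (B \<oplus> C)" using sp_I[of a A "b + c" "B \<oplus> C"] sp_I[of b B c C] by (simp add: add.assoc)
  qed
  show "A \<oplus> (B \<oplus> C) \<subseteq> (A \<oplus> B) \<oplus> C"
  proof
    fix z assume "z \<in> A \<oplus> (B \<oplus> C)"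
    then obtain a u b c where "a \<in> A" "u \<in> B \<oplus> C" "z = a + u" "b \<in> B" "c \<in> C" "u = b + c" by blast
    thus "z \<in> (A \<oplus> B) \<oplus> C" using sp_I[of "a + b" "A \<oplus> B" c C] sp_I[of a A b B] by (simp add: add.assoc)
  qed
qed

lemma sp_mono: "A \<subseteq> A' \<Longrightarrow> B \<subseteq> B' \<Longrightarrow> A \<oplus> B \<subseteq> A' \<oplus> B'"
  unfolding sp_def by blast

lemma sp_Un1: "(A \<union> A') \<oplus> B = (A \<oplus> B) \<union> (A' \<oplus> B)"
  unfolding sp_def by blast

lemma sp_zero[simp]: "{0} \<oplus> B = B" "B \<oplus> {0} = B"
  unfolding sp_def by auto

lemma sp_single: "{x} \<oplus> B = (+) x ` B"
  unfolding sp_def by auto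

lemma sp_tr2: "A \<oplus> ((+) g ` B) = (+) g ` (A \<oplus> B)"
proof -
  have "(+) g ` B = {g} \<oplus> B" by (simp add: sp_single)
  moreover have "(+) g ` (A \<oplus> B) = {g} \<oplus> (A \<oplus> B)" by (simp add: sp_single)
  ultimately show ?thesis by (metis sp_assoc sp_comm)
qed

lemma sp_tr1: "((+) g ` A) \<oplus> B = (+) g ` (A \<oplus> B)"
  by (metis sp_comm sp_tr2)

lemma card_sp_ge2: "finite B \<Longrightarrow> a \<in> A \<Longrightarrow> card B \<le> card (A \<oplus> B)" if "finite A"
proof -
  assume fB: "finite B" and a: "a \<in> A"
  have "(+) a ` B \<subseteq> A \<oplus> B" using a by auto
  moreover have "card ((+) a ` B) = card B" by (simp add: card_image)
  ultimately show ?thesis using that fB by (metis card_mono sp_finite)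
qed

lemma card_sp_ge1: "finite A \<Longrightarrow> finite B \<Longrightarrow> b \<in> B \<Longrightarrow> card A \<le> card (A \<oplus> B)"
  by (metis card_sp_ge2 sp_comm)

section \<open>Stabilizers and subgroups\<close>

lemma tr_sub_eq: "finite (S::'a::ab_group_add set) \<Longrightarrow> (+) g ` S \<subseteq> S \<Longrightarrow> (+) g ` S = S"
proof -
  assume f: "finite S" and s: "(+) g ` S \<subseteq> S"
  have "card ((+) g ` S) = card S" by (rule card_image) (simp add: inj_on_def)
  thus ?thesis using card_subset_eq[OF f s] by simp
qed

lemma stab_iff: "g \<in> stab S \<longleftrightarrow> (+) g ` S = S"
  unfolding stab_def by simp

lemma stab_mem: "g \<in> stab S \<Longrightarrow> x \<in> S \<Longrightarrow> g + x \<in> S"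
  unfolding stab_def by blast

lemma stab_I: "finite S \<Longrightarrow> (\<And>x. x \<in> S \<Longrightarrow> g + x \<in> S) \<Longrightarrow> g \<in> stab S"
  unfolding stab_def using tr_sub_eq by blast

lemma stab_zero[simp]: "0 \<in> stab S"
  unfolding stab_def by simp

lemma stab_add: "g \<in> stab S \<Longrightarrow> h \<in> stab S \<Longrightarrow> g + h \<in> stab S"
proof -
  assume g: "g \<in> stab S" and h: "h \<in> stab S"
  have "(+) (g + h) ` S = (+) g ` ((+) h ` S)" by (auto simp: image_image add.assoc)
  thus ?thesis using g h unfolding stab_def by simp
qed

lemma stab_neg: "g \<in> stab S \<Longrightarrow> - g \<in> stab S"
proof -
  assume g: "g \<in> stab S"
  have "(+) (- g) ` S = (+) (- g) ` ((+) g ` S)" using g unfolding stab_def by simp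
  also have "\<dots> = S" by (simp add: image_image)
  finally show ?thesis unfolding stab_def by simp
qed

lemma sg_stab: "sg (stab S)"
  unfolding sg_def using stab_add stab_neg by auto

lemma stab_sub: "s \<in> S \<Longrightarrow> stab S \<subseteq> (\<lambda>x. x - s) ` S"
proof
  fix g assume s: "s \<in> S" and g: "g \<in> stab S"
  have "g + s \<in> S" using stab_mem[OF g s] .
  thus "g \<in> (\<lambda>x. x - s) ` S" by (metis add_diff_cancel image_eqI)
qed

lemma stab_finite: "finite S \<Longrightarrow> S \<noteq> {} \<Longrightarrow> finite (stab S)"
  using stab_sub by (meson equals0I finite_imageI finite_subset)

lemma stab_card_le: "finite S \<Longrightarrow> S \<noteq> {} \<Longrightarrow> card (stab S) \<le> card S"
  using stab_sub by (metis card_image_le card_mono equals0I finite_imageI order_trans)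

lemma stab_tr: "stab ((+) g ` S) = stab S"
proof -
  have "(+) h ` ((+) g ` S) = (+) g ` ((+) h ` S)" for h by (auto simp: image_image add_ac)
  moreover have "inj ((+) g)" by (simp add: inj_def)
  ultimately show ?thesis unfolding stab_def by (auto simp: inj_image_eq_iff)
qed

lemma sg_sp_self: "sg H \<Longrightarrow> H \<oplus> H = H"
  unfolding sg_def sp_def by force

lemma sp_sg_sup: "sg H \<Longrightarrow> X \<subseteq> X \<oplus> H"
  unfolding sg_def sp_def by force

lemma sp_sg_idem: "sg H \<Longrightarrow> (X \<oplus> H) \<oplus> H = X \<oplus> H"
  by (simp add: sg_sp_self sp_assoc)

lemma sp_stab_self: "S \<oplus> stab S = S"
proof
  show "S \<oplus> stab S \<subseteq> S"
    by (auto simp: sp_iff) (metis add.commute stab_mem)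
  show "S \<subseteq> S \<oplus> stab S" using sp_sg_sup[OF sg_stab] .
qed

lemma periodic_iff: "sg H \<Longrightarrow> finite S \<Longrightarrow> S \<oplus> H = S \<longleftrightarrow> H \<subseteq> stab S"
proof
  assume H: "sg H" and f: "finite S"
  { assume e: "S \<oplus> H = S"
    show "H \<subseteq> stab S"
    proof
      fix h assume "h \<in> H"
      hence "h + x \<in> S" if "x \<in> S" for x using e that by (metis add.commute sp_I)
      thus "h \<in> stab S" using stab_I[OF f] by blast
    qed }
  { assume e: "H \<subseteq> stab S"
    have "S \<oplus> H \<subseteq> S" using e by (auto simp: sp_iff) (metis add.commute stab_mem subsetD)
    thus "S \<oplus> H = S" using sp_sg_sup[OF H] by blast }
qed

lemma stab_sp_mono: "stab P \<subseteq> stab (P \<oplus> Q)"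
proof
  fix g assume "g \<in> stab P"
  hence "(+) g ` (P \<oplus> Q) = P \<oplus> Q" using sp_tr1[of g P Q] unfolding stab_def by simp
  thus "g \<in> stab (P \<oplus> Q)" unfolding stab_def by simp
qed

lemma sg_sub_stab_sp: "sg H \<Longrightarrow> H \<subseteq> stab (X \<oplus> H)"
proof
  fix h assume H: "sg H" and h: "h \<in> H"
  have "(+) h ` (X \<oplus> H) = X \<oplus> ((+) h ` H)" by (simp add: sp_tr2)
  also have "(+) h ` H = H"
  proof
    show "(+) h ` H \<subseteq> H" using H h unfolding sg_def by auto
    show "H \<subseteq> (+) h ` H"
    proof
      fix y assume "y \<in> H"
      hence "y - h \<in> H" using H h unfolding sg_def by (metis diff_conv_add_uminus)
      thus "y \<in> (+) h ` H" by (metis add_diff_cancel_left' diff_add_cancel image_eqI add.commute)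
    qed
  qed
  finally show "h \<in> stab (X \<oplus> H)" unfolding stab_def by simp
qed

section \<open>Cosets\<close>

lemma cs_iff: "sg H \<Longrightarrow> y \<in> cs x H \<longleftrightarrow> y - x \<in> H"
  unfolding cs_def by (auto simp: image_iff) (metis add_diff_cancel_left' diff_add_cancel add.commute)

lemma cs_card: "card (cs x H) = card H"
  unfolding cs_def by (simp add: card_image)

lemma cs_self: "sg H \<Longrightarrow> x \<in> cs x H"
  using cs_iff by (metis diff_self sg_def)

lemma cs_eq: "sg H \<Longrightarrow> y \<in> cs x H \<Longrightarrow> cs y H = cs x H"
proof -
  assume H: "sg H" and y: "y \<in> cs x H"
  have yx: "y - x \<in> H" using cs_iff[OF H] y by blast
  have "z - y \<in> H \<longleftrightarrow> z - x \<in> H" for z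
  proof
    assume "z - y \<in> H" thus "z - x \<in> H" using yx H unfolding sg_def
      by (metis diff_add_cancel add_diff_eq diff_diff_eq2 add.commute)
  next
    assume zx: "z - x \<in> H"
    have "-(y - x) \<in> H" using yx H unfolding sg_def by blast
    hence "(z - x) + (-(y - x)) \<in> H" using zx H unfolding sg_def by blast
    thus "z - y \<in> H" by (simp add: algebra_simps)
  qed
  thus ?thesis using cs_iff[OF H] by blast
qed

lemma cs_disj: "sg H \<Longrightarrow> cs x H \<noteq> cs y H \<Longrightarrow> cs x H \<inter> cs y H = {}"
  by (metis cs_eq disjoint_iff)

lemma periodic_cs: "sg H \<Longrightarrow> X \<oplus> H = X \<Longrightarrow> x \<in> X \<Longrightarrow> cs x H \<subseteq> X"
proof
  fix y assume e: "X \<oplus> H = X" and x: "x \<in> X" and y: "y \<in> cs x H"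
  then obtain h where "h \<in> H" "y = x + h" unfolding cs_def by auto
  thus "y \<in> X" using sp_I[of x X h H] e x by auto
qed

lemma stab_in_coset: "sg H \<Longrightarrow> P \<subseteq> cs z H \<Longrightarrow> P \<noteq> {} \<Longrightarrow> stab P \<subseteq> H"
proof
  fix g assume H: "sg H" and P: "P \<subseteq> cs z H" "P \<noteq> {}" and g: "g \<in> stab P"
  obtain p where p: "p \<in> P" using P by blast
  have "g + p \<in> P" using stab_mem[OF g p] .
  hence "g + p - z \<in> H" "p - z \<in> H" using P p cs_iff[OF H] by blast+
  hence "(g + p - z) + (-(p - z)) \<in> H" using H unfolding sg_def by blast
  thus "g \<in> H" by (simp add: algebra_simps)
qed



definition kn :: "'a::ab_group_add set \<Rightarrow> 'a set \<Rightarrow> bool" where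
  "kn A B \<longleftrightarrow> card (A \<oplus> stab (A \<oplus> B)) + card (B \<oplus> stab (A \<oplus> B))
              \<le> card (A \<oplus> B) + card (stab (A \<oplus> B))"

lemma triv_case:
  fixes s t :: "'a::ab_group_add set"
  assumes fs: "finite s" and ft: "finite t" and nes: "s \<noteq> {}" and ne: "t \<noteq> {}"
    and T: "\<And>g. (+) g ` t \<inter> s \<noteq> {} \<Longrightarrow> (+) g ` t \<subseteq> s"
  shows "card s + card t \<le> card (s \<oplus> t) + card (stab (s \<oplus> t))"
proof -
  obtain b where b: "b \<in> t" using ne by blast
  have diff: "b1 - b2 \<in> stab s" if b12: "b1 \<in> t" "b2 \<in> t" for b1 b2
  proof (rule stab_I[OF fs])
    fix x assume x: "x \<in> s"
    have "x - b2 + b2 \<in> (+) (x - b2) ` t" using b12(2) by blast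
    hence "(+) (x - b2) ` t \<inter> s \<noteq> {}" using x by auto
    hence "(+) (x - b2) ` t \<subseteq> s" by (rule T)
    hence "x - b2 + b1 \<in> s" using b12(1) by blast
    thus "b1 - b2 + x \<in> s" by (simp add: algebra_simps)
  qed
  have eq: "s \<oplus> t = (+) b ` s"
  proof
    show "s \<oplus> t \<subseteq> (+) b ` s"
    proof
      fix z assume "z \<in> s \<oplus> t"
      then obtain a c where ac: "a \<in> s" "c \<in> t" "z = a + c" by blast
      hence "c - b + a \<in> s" using diff[of c b] b stab_mem by blast
      moreover have "z = b + (c - b + a)" using ac(3) by (simp add: algebra_simps)
      ultimately show "z \<in> (+) b ` s" by blast
    qed
    show "(+) b ` s \<subseteq> s \<oplus> t"
    proof
      fix z assume "z \<in> (+) b ` s"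
      then obtain a where "a \<in> s" "z = b + a" by blast
      thus "z \<in> s \<oplus> t" using sp_I[of a s b t] b by (simp add: add.commute)
    qed
  qed
  have c1: "card (s \<oplus> t) = card s" using eq by (simp add: card_image)
  have st: "stab (s \<oplus> t) = stab s" using eq stab_tr by simp
  have sub: "(\<lambda>c. c - b) ` t \<subseteq> stab s" using diff b by blast
  have "card t = card ((\<lambda>c. c - b) ` t)" by (rule card_image[symmetric]) (simp add: inj_on_def)
  also have "\<dots> \<le> card (stab s)" using card_mono[OF stab_finite[OF fs nes] sub] .
  finally show ?thesis using c1 st by simp
qed

lemma card_Un_sp_le:
  fixes P Q L :: "'a::ab_group_add set"
  assumes "finite P" "finite Q" "finite L"
  shows "card ((P \<union> Q) \<oplus> L) \<le> card (P \<oplus> L) + card (Q \<oplus> L)"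
  using assms by (simp add: sp_Un1 card_Un_le)

lemma coset_closed:
  fixes H L :: "'a::ab_group_add set"
  assumes H: "sg H" and LH: "L \<subseteq> H" and u: "u \<in> cs x H" and l: "l \<in> L"
  shows "u + l \<in> cs x H"
proof -
  have "u - x \<in> H" using u cs_iff[OF H] by blast
  hence "(u - x) + l \<in> H" using H l LH unfolding sg_def by blast
  thus ?thesis using cs_iff[OF H] by (simp add: algebra_simps)
qed

lemma coset_out:
  fixes H L :: "'a::ab_group_add set"
  assumes H: "sg H" and L: "sg L" and LH: "L \<subseteq> H" and u: "u \<notin> cs x H" and l: "l \<in> L"
  shows "u + l \<notin> cs x H"
proof
  assume "u + l \<in> cs x H"
  moreover have "- l \<in> L" using L l unfolding sg_def by blast
  ultimately have "u + l + - l \<in> cs x H" using coset_closed[OF H LH] by blast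
  thus False using u by simp
qed

lemma sp_coset_sub:
  fixes H L :: "'a::ab_group_add set"
  assumes H: "sg H" and LH: "L \<subseteq> H" and P: "P \<subseteq> cs x H"
  shows "P \<oplus> L \<subseteq> cs x H"
  using coset_closed[OF H LH] P by blast

lemma cs_sub_sp:
  fixes H :: "'a::ab_group_add set"
  assumes "x \<in> U"
  shows "cs x H \<subseteq> U \<oplus> H"
  unfolding cs_def using assms by auto

lemma coset_bound1:
  fixes U H L :: "'a::ab_group_add set"
  assumes H: "sg H" and L: "sg L" and LH: "L \<subseteq> H" and fU: "finite U" and fH: "finite H"
    and x: "x \<in> U"
  shows "card (U \<oplus> L) + card H \<le> card (U \<oplus> H) + card ((U \<inter> cs x H) \<oplus> L)"
proof -
  let ?X = "cs x H"
  have fL: "finite L" using finite_subset LH fH by blast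
  have Ueq: "U = (U - ?X) \<union> (U \<inter> ?X)" by blast
  have sub2: "(U - ?X) \<oplus> L \<subseteq> (U \<oplus> H) - ?X"
  proof
    fix z assume "z \<in> (U - ?X) \<oplus> L"
    then obtain u l where u: "u \<in> U" "u \<notin> ?X" and l: "l \<in> L" and z: "z = u + l" by blast
    have "z \<in> U \<oplus> H" using u l LH z by blast
    moreover have "z \<notin> ?X" using coset_out[OF H L LH u(2) l] z by simp
    ultimately show "z \<in> (U \<oplus> H) - ?X" by blast
  qed
  have Xsub: "?X \<subseteq> U \<oplus> H" using cs_sub_sp[OF x] .
  have fUH: "finite (U \<oplus> H)" using fU fH by simp
  have "card (U \<oplus> L) \<le> card ((U - ?X) \<oplus> L) + card ((U \<inter> ?X) \<oplus> L)"
    using card_Un_sp_le[of "U - ?X" "U \<inter> ?X" L] fU fL Ueq by (metis finite_Diff finite_Int)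
  also have "card ((U - ?X) \<oplus> L) \<le> card ((U \<oplus> H) - ?X)"
    using card_mono[OF _ sub2] fUH by simp
  also have "card ((U \<oplus> H) - ?X) = card (U \<oplus> H) - card H"
    using card_Diff_subset[OF finite_subset[OF Xsub fUH] Xsub] cs_card[of x H] by simp
  finally show ?thesis using card_mono[OF fUH Xsub] cs_card[of x H] by simp
qed

lemma coset_bound2:
  fixes U H L :: "'a::ab_group_add set"
  assumes H: "sg H" and L: "sg L" and LH: "L \<subseteq> H" and fU: "finite U" and fH: "finite H"
    and x: "x \<in> U" and y: "y \<in> U" and XY: "cs x H \<noteq> cs y H"
  shows "card (U \<oplus> L) + 2 * card H \<le> card (U \<oplus> H) + card ((U \<inter> cs x H) \<oplus> L) + card ((U \<inter> cs y H) \<oplus> L)"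
proof -
  let ?X = "cs x H" and ?Y = "cs y H"
  have fL: "finite L" using finite_subset LH fH by blast
  have disj: "?X \<inter> ?Y = {}" using cs_disj[OF H XY] .
  have Ueq: "U = ((U - ?X - ?Y) \<union> (U \<inter> ?X)) \<union> (U \<inter> ?Y)" by blast
  have sub2: "(U - ?X - ?Y) \<oplus> L \<subseteq> (U \<oplus> H) - (?X \<union> ?Y)"
  proof
    fix z assume "z \<in> (U - ?X - ?Y) \<oplus> L"
    then obtain u l where u: "u \<in> U" "u \<notin> ?X" "u \<notin> ?Y" and l: "l \<in> L" and z: "z = u + l" by blast
    have "z \<in> U \<oplus> H" using u l LH z by blast
    moreover have "z \<notin> ?X" using coset_out[OF H L LH u(2) l] z by simp
    moreover have "z \<notin> ?Y" using coset_out[OF H L LH u(3) l] z by simp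
    ultimately show "z \<in> (U \<oplus> H) - (?X \<union> ?Y)" by blast
  qed
  have XYsub: "?X \<union> ?Y \<subseteq> U \<oplus> H" using cs_sub_sp[OF x] cs_sub_sp[OF y] by blast
  have fUH: "finite (U \<oplus> H)" using fU fH by simp
  have cXY: "card (?X \<union> ?Y) = 2 * card H"
    using card_Un_disjoint[OF finite_subset[OF _ fUH] finite_subset[OF _ fUH] disj] XYsub cs_card[of x H] cs_card[of y H]
    by simp
  have "card (U \<oplus> L) \<le> card (((U - ?X - ?Y) \<union> (U \<inter> ?X)) \<oplus> L) + card ((U \<inter> ?Y) \<oplus> L)"
    using card_Un_sp_le[of "(U - ?X - ?Y) \<union> (U \<inter> ?X)" "U \<inter> ?Y" L] fU fL Ueq by (metis finite_Diff finite_Int finite_Un)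
  also have "card (((U - ?X - ?Y) \<union> (U \<inter> ?X)) \<oplus> L) \<le> card ((U - ?X - ?Y) \<oplus> L) + card ((U \<inter> ?X) \<oplus> L)"
    using card_Un_sp_le[of "U - ?X - ?Y" "U \<inter> ?X" L] fU fL by simp
  also have "card ((U - ?X - ?Y) \<oplus> L) \<le> card ((U \<oplus> H) - (?X \<union> ?Y))"
    using card_mono[OF _ sub2] fUH by simp
  also have "card ((U \<oplus> H) - (?X \<union> ?Y)) = card (U \<oplus> H) - 2 * card H"
    using card_Diff_subset[OF finite_subset[OF XYsub fUH] XYsub] cXY by simp
  finally show ?thesis using card_mono[OF fUH XYsub] cXY by simp
qed

lemma IH_bound:
  fixes P Q L D :: "'a::ab_group_add set"
  assumes IH: "\<And>A B::'a set. finite A \<Longrightarrow> finite B \<Longrightarrow> A \<noteq> {} \<Longrightarrow> B \<noteq> {} \<Longrightarrow> card (A \<oplus> B) < n \<Longrightarrow> kn A B"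
    and fP: "finite P" and fQ: "finite Q" and fL: "finite L" and neP: "P \<noteq> {}" and neQ: "Q \<noteq> {}"
    and L: "sg L" and PQ: "P \<oplus> Q \<subseteq> D" and DL: "D \<oplus> L = D" and fD: "finite D" and Dn: "card D < n"
  shows "card (P \<oplus> L) + card (Q \<oplus> L) \<le> card ((P \<oplus> L) \<oplus> (Q \<oplus> L)) + card (stab ((P \<oplus> L) \<oplus> (Q \<oplus> L)))"
    and "(P \<oplus> L) \<oplus> (Q \<oplus> L) \<subseteq> D"
proof -
  let ?P = "P \<oplus> L" and ?Q = "Q \<oplus> L"
  let ?R = "?P \<oplus> ?Q" and ?M = "stab (?P \<oplus> ?Q)"
  have "?R = (P \<oplus> Q) \<oplus> (L \<oplus> L)" by (metis sp_assoc sp_comm)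
  also have "\<dots> = (P \<oplus> Q) \<oplus> L" using sg_sp_self[OF L] by simp
  also have "\<dots> \<subseteq> D \<oplus> L" using PQ sp_mono by blast
  finally show RD: "?R \<subseteq> D" using DL by simp
  have fR: "finite ?R" using fP fQ fL by simp
  have Rn: "card ?R < n" using card_mono[OF fD RD] Dn by simp
  have ne: "?P \<noteq> {}" "?Q \<noteq> {}" using neP neQ sp_sg_sup[OF L] by blast+
  have "kn ?P ?Q" by (rule IH) (use fP fQ fL ne Rn in simp_all)
  hence k: "card (?P \<oplus> ?M) + card (?Q \<oplus> ?M) \<le> card ?R + card ?M" unfolding kn_def .
  have fM: "finite ?M" using stab_finite[OF fR sp_ne[OF ne]] .
  have "card ?P \<le> card (?P \<oplus> ?M)"
    using card_mono[OF sp_finite[OF sp_finite[OF fP fL] fM] sp_sg_sup[OF sg_stab]] .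
  moreover have "card ?Q \<le> card (?Q \<oplus> ?M)"
    using card_mono[OF sp_finite[OF sp_finite[OF fQ fL] fM] sp_sg_sup[OF sg_stab]] .
  ultimately show "card ?P + card ?Q \<le> card ?R + card ?M" using k by simp
qed



lemma two_piece_bound:
  fixes H L D R1 R2 Z :: "'a::ab_group_add set"
  assumes H: "sg H" and fH: "finite H" and L: "L = stab D" and fD: "finite D"
    and DZ: "D \<subseteq> Z" and Z: "Z = cs w H" and ZD: "\<not> Z \<subseteq> D"
    and R12: "R1 \<union> R2 = D" and ne1: "R1 \<noteq> {}" and ne2: "R2 \<noteq> {}"
  shows "card R1 + card R2 + card (stab R1) + card (stab R2) \<le> card H + card D + card L"
proof -
  let ?M1 = "stab R1" and ?M2 = "stab R2"
  have fR1: "finite R1" and fR2: "finite R2" using R12 fD by (auto intro: finite_subset)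
  have fZ: "finite Z" using Z fH unfolding cs_def by simp
  have cZ: "card Z = card H" using Z cs_card by simp
  obtain z where zZ: "z \<in> Z" and zD: "z \<notin> D" using ZD by blast
  have R1Z: "R1 \<subseteq> cs w H" and R2Z: "R2 \<subseteq> cs w H" using R12 DZ Z by auto
  have M1H: "?M1 \<subseteq> H" using stab_in_coset[OF H R1Z ne1] .
  have M2H: "?M2 \<subseteq> H" using stab_in_coset[OF H R2Z ne2] .
  have M12L: "?M1 \<inter> ?M2 \<subseteq> L"
  proof
    fix g assume g: "g \<in> ?M1 \<inter> ?M2"
    have "(+) g ` D = (+) g ` R1 \<union> (+) g ` R2" using R12 by auto
    also have "\<dots> = R1 \<union> R2" using g unfolding stab_def by simp
    finally show "g \<in> L" using R12 L unfolding stab_def by simp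
  qed
  have out1: "cs z ?M1 \<inter> R1 = {}"
  proof (rule ccontr)
    assume "cs z ?M1 \<inter> R1 \<noteq> {}"
    then obtain m where m: "m \<in> ?M1" "z + m \<in> R1" unfolding cs_def by auto
    have "- m \<in> ?M1" using stab_neg m(1) by blast
    hence "- m + (z + m) \<in> R1" using stab_mem m(2) by blast
    thus False using zD R12 by auto
  qed
  have out2: "cs z ?M2 \<inter> R2 = {}"
  proof (rule ccontr)
    assume "cs z ?M2 \<inter> R2 \<noteq> {}"
    then obtain m where m: "m \<in> ?M2" "z + m \<in> R2" unfolding cs_def by auto
    have "- m \<in> ?M2" using stab_neg m(1) by blast
    hence "- m + (z + m) \<in> R2" using stab_mem m(2) by blast
    thus False using zD R12 by auto
  qed
  have zsub: "cs z ?M1 \<union> cs z ?M2 \<subseteq> Z"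
  proof -
    have "z \<in> cs w H" using zZ Z by simp
    hence "cs z H = Z" using cs_eq[OF H] Z by simp
    thus ?thesis using M1H M2H unfolding cs_def by auto
  qed
  have int: "R1 \<inter> R2 \<subseteq> Z - (cs z ?M1 \<union> cs z ?M2)" using out1 out2 R1Z R2Z Z by blast
  have fM1: "finite ?M1" using stab_finite[OF fR1 ne1] .
  have fM2: "finite ?M2" using stab_finite[OF fR2 ne2] .
  have fL: "finite L" using L stab_finite[OF fD] R12 ne1 by blast
  have ii: "cs z ?M1 \<inter> cs z ?M2 = cs z (?M1 \<inter> ?M2)" unfolding cs_def by auto
  have "card (cs z ?M1 \<inter> cs z ?M2) \<le> card L"
    using ii cs_card[of z "?M1 \<inter> ?M2"] card_mono[OF fL M12L] by simp
  moreover have "card (cs z ?M1 \<union> cs z ?M2) + card (cs z ?M1 \<inter> cs z ?M2) = card ?M1 + card ?M2"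
    using card_Un_Int[of "cs z ?M1" "cs z ?M2"] fM1 fM2 cs_card[of z ?M1] cs_card[of z ?M2]
    unfolding cs_def by simp
  ultimately have u: "card ?M1 + card ?M2 \<le> card (cs z ?M1 \<union> cs z ?M2) + card L" by simp
  have "card (R1 \<inter> R2) \<le> card (Z - (cs z ?M1 \<union> cs z ?M2))"
    using card_mono[OF _ int] fZ by simp
  also have "\<dots> = card Z - card (cs z ?M1 \<union> cs z ?M2)"
    using card_Diff_subset[OF finite_subset[OF zsub fZ] zsub] .
  finally have i2: "card (R1 \<inter> R2) + card (cs z ?M1 \<union> cs z ?M2) \<le> card H"
    using card_mono[OF fZ zsub] cZ by simp
  have "card R1 + card R2 = card D + card (R1 \<inter> R2)"
    using card_Un_Int[OF fR1 fR2] R12 by simp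
  thus ?thesis using u i2 by simp
qed

lemma extension:
  fixes s t C :: "'a::ab_group_add set"
  assumes IH: "\<And>A B::'a set. finite A \<Longrightarrow> finite B \<Longrightarrow> A \<noteq> {} \<Longrightarrow> B \<noteq> {} \<Longrightarrow> card (A \<oplus> B) < card (s \<oplus> t) \<Longrightarrow> kn A B"
    and fs: "finite s" and ft: "finite t"
    and CS: "C \<subseteq> s \<oplus> t" and Cne: "C \<noteq> {}"
    and conv: "card (s \<inter> t) + card ((s \<union> t) \<oplus> stab C) \<le> card C + card (stab C)"
    and w: "w \<in> s \<oplus> t" and wn: "\<not> cs w (stab C) \<subseteq> s \<oplus> t"
  shows "\<exists>C'. C' \<subseteq> s \<oplus> t \<and> C' \<noteq> {} \<and>
           card (s \<inter> t) + card ((s \<union> t) \<oplus> stab C') \<le> card C' + card (stab C') \<and>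
           card (stab C') < card (stab C)"
proof -
  define S where "S = s \<oplus> t"
  define H where "H = stab C"
  define U where "U = s \<union> t"
  have fS: "finite S" using fs ft S_def by simp
  have fC: "finite C" using finite_subset[OF CS] fS S_def by simp
  have H: "sg H" using sg_stab H_def by simp
  have fH: "finite H" using stab_finite[OF fC Cne] H_def by simp
  have CH: "C \<oplus> H = C" using sp_stab_self H_def by simp
  have fU: "finite U" using fs ft U_def by simp
  obtain x y where x: "x \<in> s" and y: "y \<in> t" and wxy: "w = x + y" using w by blast
  define X where "X = cs x H"
  define Y where "Y = cs y H"
  define Z where "Z = cs w H"
  have xX: "x \<in> X" using cs_self[OF H] X_def by simp
  have yY: "y \<in> Y" using cs_self[OF H] Y_def by simp
  have wZ: "w \<in> Z" using cs_self[OF H] Z_def by simp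
  have wC: "w \<notin> C"
  proof
    assume "w \<in> C"
    hence "Z \<subseteq> C" using periodic_cs[OF H CH] Z_def by simp
    thus False using wn CS Z_def H_def by auto
  qed
  have CZ: "C \<inter> Z = {}"
  proof (rule ccontr)
    assume "C \<inter> Z \<noteq> {}"
    then obtain c where c: "c \<in> C" "c \<in> Z" by blast
    have "cs c H = Z" using cs_eq[OF H] c(2) Z_def by simp
    hence "Z \<subseteq> C" using periodic_cs[OF H CH c(1)] by simp
    thus False using wC wZ by blast
  qed
  have XYZ1: "a + b \<in> Z" if "a \<in> X" "b \<in> Y" for a b
  proof -
    have "a - x \<in> H" "b - y \<in> H" using that cs_iff[OF H] X_def Y_def by blast+
    hence "(a - x) + (b - y) \<in> H" using H unfolding sg_def by blast
    thus ?thesis using cs_iff[OF H] Z_def wxy by (simp add: algebra_simps)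
  qed
  have XYZ2: "a + b \<in> Z" if "a \<in> Y" "b \<in> X" for a b
    using XYZ1[OF that(2) that(1)] by (simp add: add.commute)
  define sX where "sX = s \<inter> X"
  define tY where "tY = t \<inter> Y"
  define sY where "sY = s \<inter> Y"
  define tX where "tX = t \<inter> X"
  define D where "D = (sX \<oplus> tY) \<union> (sY \<oplus> tX)"
  have fin4: "finite sX" "finite tY" "finite sY" "finite tX"
    using fs ft sX_def tY_def sY_def tX_def by auto
  have DZ: "D \<subseteq> Z" unfolding D_def sX_def tY_def sY_def tX_def using XYZ1 XYZ2 by blast
  have DS: "D \<subseteq> S" unfolding D_def sX_def tY_def sY_def tX_def S_def
    using sp_mono[of "s \<inter> X" s "t \<inter> Y" t] sp_mono[of "s \<inter> Y" s "t \<inter> X" t] by blast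
  have xsX: "x \<in> sX" using x xX sX_def by simp
  have ytY: "y \<in> tY" using y yY tY_def by simp
  have wD: "w \<in> D" unfolding D_def using xsX ytY wxy by blast
  have fD: "finite D" using fin4 D_def by simp
  have ZD: "\<not> Z \<subseteq> D" using wn DS S_def Z_def H_def by blast
  define L where "L = stab D"
  have L: "sg L" using sg_stab L_def by simp
  have LH: "L \<subseteq> H" using stab_in_coset[OF H _ ] DZ wD Z_def L_def by blast
  have fL: "finite L" using finite_subset[OF LH fH] .
  have DL: "D \<oplus> L = D" using sp_stab_self L_def by simp
  have HnL: "\<not> H \<subseteq> L"
  proof
    assume "H \<subseteq> L"
    hence "H \<subseteq> stab D" using L_def by simp
    hence "D \<oplus> H = D" using periodic_iff[OF H fD] by simp
    hence "Z \<subseteq> D" using periodic_cs[OF H _ wD] Z_def by simp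
    thus False using ZD by simp
  qed
  have cardL: "card L < card H" using psubset_card_mono[OF fH] LH HnL by blast
  define C' where "C' = C \<union> D"
  have CD: "C \<inter> D = {}" using CZ DZ by blast
  have fC': "finite C'" using fC fD C'_def by simp
  have stabC': "stab C' = L"
  proof
    show "L \<subseteq> stab C'"
    proof
      fix g assume g: "g \<in> L"
      have "g \<in> H" using g LH by blast
      hence "(+) g ` C = C" using H_def unfolding stab_def by simp
      moreover have "(+) g ` D = D" using g L_def unfolding stab_def by simp
      ultimately show "g \<in> stab C'" unfolding stab_def C'_def by (simp add: image_Un)
    qed
    show "stab C' \<subseteq> L"
    proof
      fix g assume g: "g \<in> stab C'"
      have gC: "g + c \<in> C" if c: "c \<in> C" for c
      proof (rule ccontr)
        assume "g + c \<notin> C"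
        moreover have "g + c \<in> C'" using stab_mem[OF g] c C'_def by simp
        ultimately have gcD: "g + c \<in> D" using C'_def by simp
        have "cs (g + c) H \<subseteq> C'"
        proof
          fix u assume "u \<in> cs (g + c) H"
          then obtain h where h: "h \<in> H" "u = g + c + h" unfolding cs_def by auto
          have "c + h \<in> C" using CH c h(1) by (metis sp_I)
          hence "g + (c + h) \<in> C'" using stab_mem[OF g] C'_def by simp
          thus "u \<in> C'" using h(2) by (simp add: add.assoc)
        qed
        moreover have "cs (g + c) H = Z" using cs_eq[OF H] gcD DZ Z_def by blast
        ultimately have "Z \<subseteq> D" using CZ C'_def by blast
        thus False using ZD by simp
      qed
      have gH: "g \<in> H" using stab_I[OF fC gC] H_def by simp
      have gD: "g + d \<in> D" if d: "d \<in> D" for d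
      proof -
        have "g + d \<in> C'" using stab_mem[OF g] d C'_def by simp
        moreover have "g + d \<in> Z"
          using coset_closed[OF H subset_refl _ gH, of d w] d DZ Z_def by (auto simp: add.commute)
        ultimately show ?thesis using CZ C'_def by blast
      qed
      show "g \<in> L" using stab_I[OF fD gD] L_def by simp
    qed
  qed
  have cardC': "card C' = card C + card D" using card_Un_disjoint[OF fC fD CD] C'_def by simp
  have Cne': "C \<subseteq> S" using CS S_def by simp
  have DltS: "card D < card S"
  proof -
    have "D \<subset> S" using DS Cne CD Cne' by blast
    thus ?thesis using psubset_card_mono[OF fS] by simp
  qed
  have IH': "\<And>A B::'a set. finite A \<Longrightarrow> finite B \<Longrightarrow> A \<noteq> {} \<Longrightarrow> B \<noteq> {} \<Longrightarrow> card (A \<oplus> B) < card S \<Longrightarrow> kn A B"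
    using IH S_def by simp
  have xU: "x \<in> U" and yU: "y \<in> U" using x y U_def by auto
  have UX: "U \<inter> X = sX \<union> tX" and UY: "U \<inter> Y = sY \<union> tY" using U_def sX_def tX_def sY_def tY_def by auto
  have dag: "card (U \<oplus> L) + card H \<le> card (U \<oplus> H) + card D + card L"
  proof (cases "X = Y")
    case True
    have Dsimp: "D = sX \<oplus> tY" using True D_def sX_def sY_def tX_def tY_def by auto
    have "kn sX tY" by (rule IH') (use fin4 xsX ytY Dsimp DltS in auto)
    hence k: "card (sX \<oplus> L) + card (tY \<oplus> L) \<le> card D + card L"
      unfolding kn_def using Dsimp L_def by simp
    have "U \<inter> X = sX \<union> tY" using UX True tX_def tY_def by auto
    hence "card ((U \<inter> X) \<oplus> L) \<le> card (sX \<oplus> L) + card (tY \<oplus> L)"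
      using card_Un_sp_le[OF fin4(1) fin4(2) fL] by simp
    moreover have "card (U \<oplus> L) + card H \<le> card (U \<oplus> H) + card ((U \<inter> X) \<oplus> L)"
      using coset_bound1[OF H L LH fU fH xU] X_def by simp
    ultimately show ?thesis using k by simp
  next
    case False
    have cb: "card (U \<oplus> L) + 2 * card H \<le> card (U \<oplus> H) + card ((U \<inter> X) \<oplus> L) + card ((U \<inter> Y) \<oplus> L)"
      using coset_bound2[OF H L LH fU fH xU yU] False X_def Y_def by simp
    have b1: "card ((U \<inter> X) \<oplus> L) \<le> card (sX \<oplus> L) + card (tX \<oplus> L)"
      using UX card_Un_sp_le[OF fin4(1) fin4(4) fL] by simp
    have b2: "card ((U \<inter> Y) \<oplus> L) \<le> card (sY \<oplus> L) + card (tY \<oplus> L)"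
      using UY card_Un_sp_le[OF fin4(3) fin4(2) fL] by simp
    have p1: "sX \<oplus> tY \<subseteq> D" using D_def by blast
    have p2: "sY \<oplus> tX \<subseteq> D" using D_def by blast
    note P1 = IH_bound[OF IH' fin4(1) fin4(2) fL _ _ L p1 DL fD DltS]
    have P1a: "card (sX \<oplus> L) + card (tY \<oplus> L) \<le> card ((sX \<oplus> L) \<oplus> (tY \<oplus> L)) + card (stab ((sX \<oplus> L) \<oplus> (tY \<oplus> L)))"
      using P1(1) xsX ytY by blast
    have R1D: "(sX \<oplus> L) \<oplus> (tY \<oplus> L) \<subseteq> D" using P1(2) xsX ytY by blast
    have star: "card (sX \<oplus> L) + card (tX \<oplus> L) + card (sY \<oplus> L) + card (tY \<oplus> L) \<le> card H + card D + card L"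
    proof (cases "sY = {} \<or> tX = {}")
      case True
      hence Dsimp: "D = sX \<oplus> tY" using D_def by auto
      have R1: "(sX \<oplus> L) \<oplus> (tY \<oplus> L) = D"
        using R1D Dsimp sp_mono[OF sp_sg_sup[OF L] sp_sg_sup[OF L]] by blast
      have "card (tX \<oplus> L) + card (sY \<oplus> L) \<le> card H"
      proof (cases "sY = {}")
        case True
        have "tX \<oplus> L \<subseteq> X" using sp_coset_sub[OF H LH] tX_def X_def by blast
        hence "card (tX \<oplus> L) \<le> card H" using card_mono[of X] cs_card[of x H] X_def fH
          unfolding cs_def by (metis finite_imageI)
        thus ?thesis using True by simp
      next
        case False
        hence "tX = {}" using \<open>sY = {} \<or> tX = {}\<close> by simp
        have "sY \<oplus> L \<subseteq> Y" using sp_coset_sub[OF H LH] sY_def Y_def by blast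
        hence "card (sY \<oplus> L) \<le> card H" using card_mono[of Y] cs_card[of y H] Y_def fH
          unfolding cs_def by (metis finite_imageI)
        thus ?thesis using \<open>tX = {}\<close> by simp
      qed
      thus ?thesis using P1a R1 L_def by simp
    next
      case False
      hence ne: "sY \<noteq> {}" "tX \<noteq> {}" by auto
      note P2 = IH_bound[OF IH' fin4(3) fin4(4) fL ne L p2 DL fD DltS]
      let ?R1 = "(sX \<oplus> L) \<oplus> (tY \<oplus> L)" and ?R2 = "(sY \<oplus> L) \<oplus> (tX \<oplus> L)"
      have R12: "?R1 \<union> ?R2 = D"
      proof
        show "?R1 \<union> ?R2 \<subseteq> D" using R1D P2(2) by blast
        show "D \<subseteq> ?R1 \<union> ?R2" unfolding D_def
          using sp_mono[OF sp_sg_sup[OF L] sp_sg_sup[OF L]] by blast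
      qed
      have ne1: "?R1 \<noteq> {}" using xsX ytY sp_ne sp_sg_sup[OF L] by blast
      have ne2: "?R2 \<noteq> {}" using ne sp_ne sp_sg_sup[OF L] by (metis subset_empty)
      have tp: "card ?R1 + card ?R2 + card (stab ?R1) + card (stab ?R2) \<le> card H + card D + card L"
        by (rule two_piece_bound[OF H fH L_def fD DZ Z_def ZD R12 ne1 ne2])
      show ?thesis using P1a P2(1) tp by simp
    qed
    show ?thesis using cb b1 b2 star by simp
  qed
  have conv': "card (s \<inter> t) + card (U \<oplus> L) \<le> card C' + card L"
    using conv dag cardC' H_def U_def by simp
  show ?thesis
  proof (intro exI conjI)
    show "C' \<subseteq> s \<oplus> t" using CS DS S_def C'_def by simp
    show "C' \<noteq> {}" using Cne C'_def by simp
    show "card (s \<inter> t) + card ((s \<union> t) \<oplus> stab C') \<le> card C' + card (stab C')"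
      using conv' stabC' U_def by simp
    show "card (stab C') < card (stab C)" using cardL stabC' H_def by simp
  qed
qed



lemma sp_swap: "(A \<oplus> B) \<oplus> (C \<oplus> D) = (A \<oplus> C) \<oplus> (B \<oplus> D)"
proof -
  have "(A \<oplus> B) \<oplus> (C \<oplus> D) = A \<oplus> (B \<oplus> (C \<oplus> D))" by (rule sp_assoc)
  also have "B \<oplus> (C \<oplus> D) = (B \<oplus> C) \<oplus> D" by (rule sp_assoc[symmetric])
  also have "B \<oplus> C = C \<oplus> B" by (rule sp_comm)
  also have "(C \<oplus> B) \<oplus> D = C \<oplus> (B \<oplus> D)" by (rule sp_assoc)
  also have "A \<oplus> (C \<oplus> (B \<oplus> D)) = (A \<oplus> C) \<oplus> (B \<oplus> D)" by (rule sp_assoc[symmetric])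
  finally show ?thesis .
qed

lemma inner:
  fixes n :: nat
  assumes IH: "\<And>A B::'a::ab_group_add set. finite A \<Longrightarrow> finite B \<Longrightarrow> A \<noteq> {} \<Longrightarrow> B \<noteq> {} \<Longrightarrow> card (A \<oplus> B) < n \<Longrightarrow> kn A B"
  shows "finite s \<Longrightarrow> finite t \<Longrightarrow> s \<noteq> {} \<Longrightarrow> t \<noteq> {} \<Longrightarrow> card (s \<oplus> t) = n \<Longrightarrow>
     s \<oplus> stab (s \<oplus> t) = s \<Longrightarrow> t \<oplus> stab (s \<oplus> t) = t \<Longrightarrow>
     card s + card t \<le> card (s \<oplus> t) + card (stab ((s::'a set) \<oplus> t))"
proof (induction "min (card s) (card t)" arbitrary: s t rule: less_induct)
  case less
  have main: "card s' + card t' \<le> card (s' \<oplus> t') + card (stab (s' \<oplus> t'))"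
    if fs: "finite s'" and ft: "finite t'" and nes: "s' \<noteq> {}" and net: "t' \<noteq> {}"
      and cn: "card (s' \<oplus> t') = n" and ps: "s' \<oplus> stab (s' \<oplus> t') = s'"
      and pt: "t' \<oplus> stab (s' \<oplus> t') = t'" and le: "card t' \<le> card s'"
      and mm: "min (card s') (card t') = min (card s) (card t)"
    for s' t' :: "'a set"
  proof (cases "\<forall>g. (+) g ` t' \<inter> s' \<noteq> {} \<longrightarrow> (+) g ` t' \<subseteq> s'")
    case True
    thus ?thesis using triv_case[OF fs ft nes net] by blast
  next
    case False
    then obtain g where g1: "(+) g ` t' \<inter> s' \<noteq> {}" and g2: "\<not> (+) g ` t' \<subseteq> s'" by blast
    define u where "u = (+) g ` t'"
    define K where "K = stab (s' \<oplus> t')"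
    have fu: "finite u" using ft u_def by simp
    have neu: "u \<noteq> {}" using net u_def by simp
    have cu: "card u = card t'" using u_def by (simp add: card_image)
    have su: "s' \<oplus> u = (+) g ` (s' \<oplus> t')" using sp_tr2 u_def by simp
    have csu: "card (s' \<oplus> u) = card (s' \<oplus> t')" using su by (simp add: card_image)
    have stu: "stab (s' \<oplus> u) = K" using su stab_tr K_def by simp
    have uK: "u \<oplus> K = u" using sp_tr1[of g t' K] pt K_def u_def by simp
    have sK: "s' \<oplus> K = s'" using ps K_def by simp
    have K: "sg K" using sg_stab K_def by simp
    have fsu: "finite (s' \<oplus> u)" using fs fu by simp
    have fK: "finite K" using stab_finite[OF fsu] sp_ne[OF nes neu] stu by simp
    define I where "I = s' \<inter> u"
    define V where "V = s' \<union> u"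
    have fI: "finite I" and fV: "finite V" using fs fu I_def V_def by auto
    have neI: "I \<noteq> {}" using g1 I_def u_def by blast
    have neV: "V \<noteq> {}" using nes V_def by blast
    have cIu: "card I < card u"
      using psubset_card_mono[OF fu] g2 I_def u_def by blast
    have cIV: "card I + card V = card s' + card u" using card_Un_Int[OF fs fu] I_def V_def by simp
    have IVsub: "I \<oplus> V \<subseteq> s' \<oplus> u"
    proof
      fix z assume "z \<in> I \<oplus> V"
      then obtain a b where ab: "a \<in> I" "b \<in> V" "z = a + b" by blast
      show "z \<in> s' \<oplus> u"
      proof (cases "b \<in> u")
        case True thus ?thesis using ab I_def by blast
      next
        case False
        hence "b \<in> s'" using ab V_def by blast
        moreover have "a \<in> u" using ab I_def by blast
        ultimately show ?thesis using ab(3) sp_I[of b s' a u] by (simp add: add.commute)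
      qed
    qed
    have IK: "I \<oplus> K = I"
    proof
      show "I \<oplus> K \<subseteq> I"
      proof
        fix z assume "z \<in> I \<oplus> K"
        then obtain a k where ak: "a \<in> I" "k \<in> K" "z = a + k" by blast
        have "z \<in> s'" using ak sK I_def by (metis IntD1 sp_I)
        moreover have "z \<in> u" using ak uK I_def by (metis IntD2 sp_I)
        ultimately show "z \<in> I" using I_def by simp
      qed
      show "I \<subseteq> I \<oplus> K" using sp_sg_sup[OF K] .
    qed
    have VK: "V \<oplus> K = V" using sp_Un1[of s' u K] sK uK V_def by simp
    show ?thesis
    proof (cases "card (I \<oplus> V) = n")
      case True
      have eq: "I \<oplus> V = s' \<oplus> u"
        using card_subset_eq[OF fsu IVsub] True cn csu by simp
      have "min (card I) (card V) < min (card s) (card t)"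
        using cIu cu le mm min.cobounded1[of "card I" "card V"] by linarith
      moreover have "I \<oplus> stab (I \<oplus> V) = I" "V \<oplus> stab (I \<oplus> V) = V" using eq stu IK VK by simp_all
      ultimately have "card I + card V \<le> card (I \<oplus> V) + card (stab (I \<oplus> V))"
        using less.hyps[of I V] fI fV neI neV True by blast
      thus ?thesis using eq stu cIV csu cu K_def by simp
    next
      case False
      have lt: "card (I \<oplus> V) < n" using card_mono[OF fsu IVsub] False cn csu by simp
      have "kn I V" by (rule IH) (use fI fV neI neV lt in auto)
      hence k: "card (I \<oplus> stab (I \<oplus> V)) + card (V \<oplus> stab (I \<oplus> V)) \<le> card (I \<oplus> V) + card (stab (I \<oplus> V))"
        unfolding kn_def .
      have fIV: "finite (I \<oplus> V)" using fI fV by simp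
      have fM0: "finite (stab (I \<oplus> V))" using stab_finite[OF fIV sp_ne[OF neI neV]] .
      have "card I \<le> card (I \<oplus> stab (I \<oplus> V))"
        using card_mono[OF sp_finite[OF fI fM0] sp_sg_sup[OF sg_stab]] .
      hence conv0: "card I + card (V \<oplus> stab (I \<oplus> V)) \<le> card (I \<oplus> V) + card (stab (I \<oplus> V))" using k by simp
      define F where "F = {C. C \<subseteq> s' \<oplus> u \<and> C \<noteq> {} \<and> card I + card (V \<oplus> stab C) \<le> card C + card (stab C)}"
      have IVF: "I \<oplus> V \<in> F" using F_def IVsub sp_ne[OF neI neV] conv0 by simp
      obtain C where CF: "C \<in> F" and Cmin: "\<And>C'. C' \<in> F \<Longrightarrow> card (stab C) \<le> card (stab C')"
        using ex_has_least_nat[of "\<lambda>C. C \<in> F" "I \<oplus> V" "\<lambda>C. card (stab C)"] IVF by blast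
      have CS: "C \<subseteq> s' \<oplus> u" and Cne: "C \<noteq> {}" and conv: "card I + card (V \<oplus> stab C) \<le> card C + card (stab C)"
        using CF F_def by auto
      show ?thesis
      proof (cases "\<forall>w\<in>s' \<oplus> u. cs w (stab C) \<subseteq> s' \<oplus> u")
        case True
        have HK: "stab C \<subseteq> K"
        proof
          fix h assume h: "h \<in> stab C"
          have "h + z \<in> s' \<oplus> u" if "z \<in> s' \<oplus> u" for z
            using True that h unfolding cs_def by (force simp: add.commute)
          thus "h \<in> K" using stab_I[OF fsu] stu by blast
        qed
        have "card (stab C) \<le> card K" using card_mono[OF fK HK] .
        moreover have "card C \<le> card (s' \<oplus> u)" using card_mono[OF fsu CS] .
        moreover have "card V \<le> card (V \<oplus> stab C)"
        proof -
          have fC: "finite C" using finite_subset[OF CS fsu] .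
          have "finite (stab C)" using stab_finite[OF fC Cne] .
          thus ?thesis using card_mono[OF sp_finite[OF fV] sp_sg_sup[OF sg_stab]] by blast
        qed
        ultimately have "card I + card V \<le> card (s' \<oplus> u) + card K" using conv by simp
        thus ?thesis using cIV csu cu K_def by simp
      next
        case False
        then obtain w where w: "w \<in> s' \<oplus> u" and wn: "\<not> cs w (stab C) \<subseteq> s' \<oplus> u" by blast
        have IH': "\<And>A B::'a set. finite A \<Longrightarrow> finite B \<Longrightarrow> A \<noteq> {} \<Longrightarrow> B \<noteq> {} \<Longrightarrow> card (A \<oplus> B) < card (s' \<oplus> u) \<Longrightarrow> kn A B"
          using IH csu cn by simp
        obtain C' where C': "C' \<subseteq> s' \<oplus> u" "C' \<noteq> {}"
          "card (s' \<inter> u) + card ((s' \<union> u) \<oplus> stab C') \<le> card C' + card (stab C')"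
          "card (stab C') < card (stab C)"
          using extension[OF IH' fs fu CS Cne _ w wn] conv I_def V_def by blast
        have "C' \<in> F" using C' F_def I_def V_def by simp
        thus ?thesis using Cmin C'(4) by fastforce
      qed
    qed
  qed
  show ?case
  proof (cases "card t \<le> card s")
    case True thus ?thesis using main[of s t] less.prems by simp
  next
    case False
    have c: "t \<oplus> s = s \<oplus> t" by (rule sp_comm)
    have "card t + card s \<le> card (t \<oplus> s) + card (stab (t \<oplus> s))"
      by (rule main) (use less.prems False c in \<open>auto simp: min.commute\<close>)
    thus ?thesis using c by simp
  qed
qed

theorem kneser:
  fixes A B :: "'a::ab_group_add set"
  shows "finite A \<Longrightarrow> finite B \<Longrightarrow> A \<noteq> {} \<Longrightarrow> B \<noteq> {} \<Longrightarrow> kn A B"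
proof (induction "card (A \<oplus> B)" arbitrary: A B rule: less_induct)
  case less
  define K where "K = stab (A \<oplus> B)"
  define s where "s = A \<oplus> K"
  define t where "t = B \<oplus> K"
  have K: "sg K" using sg_stab K_def by simp
  have fAB: "finite (A \<oplus> B)" using less.prems by simp
  have fK: "finite K" using stab_finite[OF fAB sp_ne] less.prems K_def by simp
  have st: "s \<oplus> t = A \<oplus> B"
    using sp_swap[of A K B K] sg_sp_self[OF K] sp_stab_self[of "A \<oplus> B"] s_def t_def K_def by simp
  have fs: "finite s" "finite t" using less.prems fK s_def t_def by auto
  have nes: "s \<noteq> {}" "t \<noteq> {}" using less.prems sp_ne K s_def t_def unfolding sg_def by blast+
  have ps: "s \<oplus> stab (s \<oplus> t) = s" using st sp_sg_idem[OF K] s_def K_def by simp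
  have pt: "t \<oplus> stab (s \<oplus> t) = t" using st sp_sg_idem[OF K] t_def K_def by simp
  have IH: "\<And>A' B'::'a set. finite A' \<Longrightarrow> finite B' \<Longrightarrow> A' \<noteq> {} \<Longrightarrow> B' \<noteq> {} \<Longrightarrow> card (A' \<oplus> B') < card (A \<oplus> B) \<Longrightarrow> kn A' B'"
    using less.hyps by blast
  have "card s + card t \<le> card (s \<oplus> t) + card (stab (s \<oplus> t))"
    by (rule inner[OF IH]) (use fs nes st ps pt in auto)
  thus ?case unfolding kn_def using st s_def t_def K_def by simp
qed



fun rs :: "'a::ab_group_add set \<Rightarrow> nat \<Rightarrow> 'a set" where
  "rs X 0 = {0}"
| "rs X (Suc r) = rs X r \<oplus> X"

lemma rs_finite: "finite X \<Longrightarrow> finite (rs X r)"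
  by (induction r) auto

lemma rs_ne: "X \<noteq> {} \<Longrightarrow> rs X r \<noteq> {}"
  by (induction r) (auto simp: sp_ne)

lemma rs_one[simp]: "rs X (Suc 0) = X"
  by simp

lemma rs_sg: "sg H \<Longrightarrow> 0 < r \<Longrightarrow> rs (X \<oplus> H) r = rs X r \<oplus> H"
proof (induction r)
  case 0 thus ?case by simp
next
  case (Suc r)
  show ?case
  proof (cases "r = 0")
    case True thus ?thesis by simp
  next
    case False
    hence "rs (X \<oplus> H) (Suc r) = (rs X r \<oplus> H) \<oplus> (X \<oplus> H)" using Suc by simp
    also have "\<dots> = (rs X r \<oplus> X) \<oplus> (H \<oplus> H)" by (rule sp_swap)
    also have "\<dots> = rs X (Suc r) \<oplus> H" using sg_sp_self[OF Suc.prems(1)] by simp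
    finally show ?thesis .
  qed
qed

lemma hfold:
  fixes X :: "'a::ab_group_add set"
  assumes "finite X" "X \<noteq> {}" "0 < r"
  shows "r * card (X \<oplus> stab (rs X r)) \<le> card (rs X r) + (r - 1) * card (stab (rs X r))"
  using assms
proof (induction r arbitrary: X)
  case 0 thus ?case by simp
next
  case (Suc r)
  show ?case
  proof (cases "r = 0")
    case True
    thus ?thesis using sp_stab_self[of X] by simp
  next
    case False
    define Y where "Y = rs X (Suc r)"
    define H where "H = stab Y"
    have H: "sg H" using sg_stab H_def by simp
    have fX: "finite X" and neX: "X \<noteq> {}" using Suc.prems by auto
    have fR: "finite (rs X r)" using rs_finite[OF fX] .
    have neR: "rs X r \<noteq> {}" using rs_ne[OF neX] .
    have Yeq: "Y = rs X r \<oplus> X" using Y_def by simp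
    have fY: "finite Y" using fR fX Yeq by simp
    have neY: "Y \<noteq> {}" using Yeq sp_ne[OF neR neX] by simp
    have fH: "finite H" using stab_finite[OF fY neY] H_def by simp
    have "kn (rs X r) X" using kneser[OF fR fX neR neX] .
    hence k: "card (rs X r \<oplus> H) + card (X \<oplus> H) \<le> card Y + card H"
      unfolding kn_def using Yeq H_def by simp
    define X' where "X' = X \<oplus> H"
    have fX': "finite X'" using fX fH X'_def by simp
    have neX': "X' \<noteq> {}" using neX sp_sg_sup[OF H] X'_def by blast
    have rsX': "rs X' r = rs X r \<oplus> H" using rs_sg[OF H] False X'_def by simp
    have stX': "stab (rs X' r) = H"
    proof
      show "H \<subseteq> stab (rs X' r)" using sg_sub_stab_sp[OF H] rsX' by simp
      have "rs X' r \<oplus> X' = Y \<oplus> H"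
        using rsX' X'_def Yeq sp_swap[of "rs X r" H X H] sg_sp_self[OF H] by simp
      also have "\<dots> = Y" using sp_stab_self[of Y] H_def by simp
      finally have "rs X' r \<oplus> X' = Y" .
      thus "stab (rs X' r) \<subseteq> H" using stab_sp_mono[of "rs X' r" X'] H_def by simp
    qed
    have ih: "r * card (X' \<oplus> H) \<le> card (rs X' r) + (r - 1) * card H"
      using Suc.IH[OF fX' neX'] False stX' by simp
    have "X' \<oplus> H = X \<oplus> H" using sp_sg_idem[OF H] X'_def by simp
    hence ih2: "r * card (X \<oplus> H) \<le> card (rs X r \<oplus> H) + (r - 1) * card H" using ih rsX' by simp
    have "Suc r * card (X \<oplus> H) = r * card (X \<oplus> H) + card (X \<oplus> H)" by simp
    also have "\<dots> \<le> card (rs X r \<oplus> H) + (r - 1) * card H + card (X \<oplus> H)" using ih2 by simp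
    also have "\<dots> \<le> card Y + card H + (r - 1) * card H" using k by simp
    also have "\<dots> = card Y + (Suc r - 1) * card H" using False by (cases r) auto
    finally have fin: "Suc r * card (X \<oplus> H) \<le> card Y + (Suc r - 1) * card H" .
    show ?thesis using fin unfolding Y_def H_def .
  qed
qed

lemma periodic_dvd:
  fixes P H :: "'a::ab_group_add set"
  assumes H: "sg H" and fP: "finite P" and PH: "P \<oplus> H = P"
  shows "card H dvd card P"
proof -
  define CC where "CC = (\<lambda>x. cs x H) ` P"
  have U: "\<Union>CC = P"
  proof
    show "\<Union>CC \<subseteq> P" using periodic_cs[OF H PH] CC_def by blast
    show "P \<subseteq> \<Union>CC" using cs_self[OF H] CC_def by blast
  qed
  have fCC: "finite CC" using fP CC_def by simp
  have c1: "\<forall>c\<in>CC. card c = card H" using CC_def cs_card by auto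
  have c2: "\<forall>c1\<in>CC. \<forall>c2\<in>CC. c1 \<noteq> c2 \<longrightarrow> c1 \<inter> c2 = {}" using cs_disj[OF H] CC_def by auto
  have "card H * card CC = card (\<Union>CC)"
    using card_partition[OF fCC _ ] U fP c1 c2 by simp
  thus ?thesis using U by (metis dvd_triv_left)
qed



definition qrel :: "rat \<Rightarrow> rat \<Rightarrow> bool" where "qrel x y \<longleftrightarrow> x - y \<in> \<int>"

lemma qrel_equivp: "equivp qrel"
proof (rule equivpI)
  show "reflp qrel" unfolding reflp_def qrel_def by simp
  show "symp qrel" unfolding symp_def qrel_def
  proof (intro allI impI)
    fix x y :: rat assume "x - y \<in> \<int>"
    hence "- (x - y) \<in> \<int>" by (rule Ints_minus)
    thus "y - x \<in> \<int>" by simp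
  qed
  show "transp qrel" unfolding transp_def qrel_def
  proof (intro allI impI)
    fix x y z :: rat assume "x - y \<in> \<int>" "y - z \<in> \<int>"
    hence "(x - y) + (y - z) \<in> \<int>" by (rule Ints_add)
    thus "x - z \<in> \<int>" by simp
  qed
qed

quotient_type qz = rat / qrel by (rule qrel_equivp)

instantiation qz :: ab_group_add
begin
lift_definition zero_qz :: qz is "0::rat" .
lift_definition plus_qz :: "qz \<Rightarrow> qz \<Rightarrow> qz" is "(+) :: rat \<Rightarrow> rat \<Rightarrow> rat"
proof -
  fix a b c d :: rat assume "qrel a b" "qrel c d"
  hence "(a - b) + (c - d) \<in> \<int>" unfolding qrel_def by (rule Ints_add)
  thus "qrel (a + c) (b + d)" unfolding qrel_def by (simp add: algebra_simps)
qed
lift_definition uminus_qz :: "qz \<Rightarrow> qz" is "uminus :: rat \<Rightarrow> rat"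
proof -
  fix a b :: rat assume "qrel a b"
  hence "- (a - b) \<in> \<int>" unfolding qrel_def by (rule Ints_minus)
  thus "qrel (- a) (- b)" unfolding qrel_def by (simp add: algebra_simps)
qed
lift_definition minus_qz :: "qz \<Rightarrow> qz \<Rightarrow> qz" is "(-) :: rat \<Rightarrow> rat \<Rightarrow> rat"
proof -
  fix a b c d :: rat assume "qrel a b" "qrel c d"
  hence "(a - b) - (c - d) \<in> \<int>" unfolding qrel_def by (rule Ints_diff)
  thus "qrel (a - c) (b - d)" unfolding qrel_def by (simp add: algebra_simps)
qed
instance
proof
  fix a b c :: qz
  show "a + b + c = a + (b + c)" by transfer (simp add: qrel_def algebra_simps)
  show "a + b = b + a" by transfer (simp add: qrel_def algebra_simps)
  show "0 + a = a" by transfer (simp add: qrel_def)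
  show "- a + a = 0" by transfer (simp add: qrel_def)
  show "a - b = a + - b" by transfer (simp add: qrel_def)
qed
end

definition phi :: "nat \<Rightarrow> nat \<Rightarrow> qz" where
  "phi m n = abs_qz (of_nat n / of_nat m)"

lemma phi_add: "phi m (a + b) = phi m a + phi m b"
  unfolding phi_def by (simp add: plus_qz.abs_eq add_divide_distrib)

lemma phi_zero[simp]: "phi m 0 = 0"
  unfolding phi_def by (simp add: zero_qz_def)

lemma abs_qz_eq: "abs_qz x = abs_qz y \<longleftrightarrow> x - y \<in> \<int>"
  by (simp add: qz.abs_eq_iff qrel_def)

lemma phi_mod: "0 < m \<Longrightarrow> phi m (a mod m) = phi m a"
proof -
  assume m: "0 < m"
  have e0: "(of_nat a :: rat) = of_nat (a mod m + m * (a div m))" by simp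
  have "of_nat a = (of_nat (a mod m) + of_nat m * of_nat (a div m) :: rat)"
    unfolding e0 by (simp only: of_nat_add of_nat_mult)
  hence "of_nat a / of_nat m = (of_nat (a mod m) / of_nat m + of_nat (a div m) :: rat)"
    using m by (simp add: field_simps)
  hence "of_nat (a mod m) / of_nat m - of_nat a / of_nat m = - (of_nat (a div m) :: rat)" by simp
  moreover have "- (of_nat (a div m) :: rat) \<in> \<int>" by (simp add: Ints_minus)
  ultimately show ?thesis unfolding phi_def abs_qz_eq by simp
qed

lemma phi_inj: "0 < m \<Longrightarrow> a < m \<Longrightarrow> b < m \<Longrightarrow> phi m a = phi m b \<Longrightarrow> a = b"
proof -
  assume m: "0 < m" and a: "a < m" and b: "b < m" and e: "phi m a = phi m b"
  hence "(of_nat a / of_nat m - of_nat b / of_nat m :: rat) \<in> \<int>" unfolding phi_def abs_qz_eq by simp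
  then obtain z :: int where z: "(of_nat a / of_nat m - of_nat b / of_nat m :: rat) = of_int z"
    by (auto elim: Ints_cases)
  hence z2: "(of_nat a - of_nat b :: rat) = of_int z * of_nat m" using m by (simp add: field_simps)
  have "(of_nat a - of_nat b :: rat) < of_nat m" "(of_nat a - of_nat b :: rat) > - of_nat m" using a b by linarith+
  hence "of_int z * of_nat m < (of_nat m :: rat)" "of_int z * of_nat m > - (of_nat m :: rat)" using z2 by simp_all
  hence "of_int z * of_nat m < (1::rat) * of_nat m" "(-1::rat) * of_nat m < of_int z * of_nat m" by simp_all
  moreover have "(0::rat) < of_nat m" using m by simp
  ultimately have "of_int z < (1::rat)" "(-1 :: rat) < of_int z"
    using mult_less_cancel_right_pos by blast+
  hence "z = 0" by linarith
  thus "a = b" using z2 by simp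
qed

lemma inj_phi: "0 < m \<Longrightarrow> inj_on (phi m) {0..<m}"
  using phi_inj by (auto simp: inj_on_def)



lemma phi_summod:
  assumes m: "0 < m"
  shows "phi m ` {(x + a) mod m | x a. x \<in> S \<and> a \<in> T} = (phi m ` S) \<oplus> (phi m ` T)"
proof
  show "phi m ` {(x + a) mod m | x a. x \<in> S \<and> a \<in> T} \<subseteq> (phi m ` S) \<oplus> (phi m ` T)"
  proof
    fix z assume "z \<in> phi m ` {(x + a) mod m | x a. x \<in> S \<and> a \<in> T}"
    then obtain x a where xa: "x \<in> S" "a \<in> T" "z = phi m ((x + a) mod m)" by blast
    hence "z = phi m x + phi m a" using phi_mod[OF m] phi_add by simp
    thus "z \<in> (phi m ` S) \<oplus> (phi m ` T)" using xa by blast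
  qed
  show "(phi m ` S) \<oplus> (phi m ` T) \<subseteq> phi m ` {(x + a) mod m | x a. x \<in> S \<and> a \<in> T}"
  proof
    fix z assume "z \<in> (phi m ` S) \<oplus> (phi m ` T)"
    then obtain x a where xa: "x \<in> S" "a \<in> T" "z = phi m x + phi m a" by (auto simp: sp_iff)
    hence "z = phi m ((x + a) mod m)" using phi_mod[OF m] phi_add by simp
    thus "z \<in> phi m ` {(x + a) mod m | x a. x \<in> S \<and> a \<in> T}" using xa by blast
  qed
qed

lemma phi_rs: "0 < m \<Longrightarrow> phi m ` sumset_rho m A r = rs (phi m ` insert 0 A) r"
proof (induction r)
  case 0 thus ?case by simp
next
  case (Suc r)
  show ?case using phi_summod[OF Suc.prems, of "sumset_rho m A r" "insert 0 A"] Suc by simp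
qed

lemma sumset_sub: "0 < m \<Longrightarrow> sumset_rho m A r \<subseteq> Zm m"
  by (induction r) (auto simp: Zm_def)

lemma card_phi: "0 < m \<Longrightarrow> S \<subseteq> Zm m \<Longrightarrow> card (phi m ` S) = card S"
proof -
  assume m: "0 < m" and S: "S \<subseteq> Zm m"
  have "inj_on (phi m) S" using inj_on_subset[OF inj_phi[OF m]] S by (simp add: Zm_def)
  thus ?thesis by (rule card_image)
qed

lemma phi_eq_iff: "0 < m \<Longrightarrow> S \<subseteq> Zm m \<Longrightarrow> T \<subseteq> Zm m \<Longrightarrow> phi m ` S = phi m ` T \<longleftrightarrow> S = T"
proof -
  assume m: "0 < m" and S: "S \<subseteq> Zm m" and T: "T \<subseteq> Zm m"
  have "inj_on (phi m) (Zm m)" using inj_phi[OF m] by (simp add: Zm_def)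
  thus ?thesis using inj_on_image_eq_iff S T by blast
qed

lemma phi_in_Z: "0 < m \<Longrightarrow> phi m n \<in> phi m ` Zm m"
proof -
  assume m: "0 < m"
  have nm: "n mod m \<in> Zm m" using m by (simp add: Zm_def)
  have "phi m n = phi m (n mod m)" using phi_mod[OF m] by simp
  thus ?thesis using nm by blast
qed

lemma phi_neg: "0 < m \<Longrightarrow> s \<le> m \<Longrightarrow> - phi m s = phi m (m - s)"
proof -
  assume m: "0 < m" and s: "s \<le> m"
  have "phi m s + phi m (m - s) = phi m m" using phi_add[of m s "m - s"] s by simp
  also have "\<dots> = 0" using phi_mod[OF m, of m] by simp
  finally have e: "phi m s + phi m (m - s) = 0" .
  have "- phi m s = - phi m s + (phi m s + phi m (m - s))" using e by simp
  also have "\<dots> = phi m (m - s)" by (simp add: add.assoc[symmetric])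
  finally show ?thesis .
qed

lemma sg_Z: "0 < m \<Longrightarrow> sg (phi m ` Zm m)"
proof -
  assume m: "0 < m"
  have "0 \<in> phi m ` Zm m" using phi_in_Z[OF m, of 0] by simp
  moreover have "x + y \<in> phi m ` Zm m" if "x \<in> phi m ` Zm m" "y \<in> phi m ` Zm m" for x y
    using that phi_add phi_in_Z[OF m] by (metis imageE)
  moreover have "- x \<in> phi m ` Zm m" if x: "x \<in> phi m ` Zm m" for x
  proof -
    obtain s where "s \<in> Zm m" "x = phi m s" using x by blast
    hence "- x = phi m (m - s)" using phi_neg[OF m] by (simp add: Zm_def)
    thus ?thesis using phi_in_Z[OF m] by simp
  qed
  ultimately show ?thesis unfolding sg_def by blast
qed

lemma sg_closed: "sg G \<Longrightarrow> X \<subseteq> G \<Longrightarrow> Y \<subseteq> G \<Longrightarrow> X \<oplus> Y \<subseteq> G"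
proof
  fix z assume G: "sg G" and X: "X \<subseteq> G" and Y: "Y \<subseteq> G" and z: "z \<in> X \<oplus> Y"
  then obtain a b where "a \<in> X" "b \<in> Y" "z = a + b" by blast
  hence "a \<in> G" "b \<in> G" "z = a + b" using X Y by auto
  thus "z \<in> G" using G unfolding sg_def by blast
qed

lemma stab_sub_sg: "sg G \<Longrightarrow> S \<subseteq> G \<Longrightarrow> S \<noteq> {} \<Longrightarrow> stab S \<subseteq> G"
proof
  fix g assume G: "sg G" and S: "S \<subseteq> G" "S \<noteq> {}" and g: "g \<in> stab S"
  obtain p where p: "p \<in> S" using S by blast
  have "g + p \<in> G" "p \<in> G" using stab_mem[OF g p] p S by auto
  hence "(g + p) + (- p) \<in> G" using G unfolding sg_def by blast
  thus "g \<in> G" by simp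
qed

lemma phi_shift: "0 < m \<Longrightarrow> phi m ` ((\<lambda>x. (x + g) mod m) ` S) = (+) (phi m g) ` (phi m ` S)"
proof -
  assume m: "0 < m"
  have "phi m ((x + g) mod m) = phi m g + phi m x" for x
    using phi_mod[OF m] phi_add[of m x g] by (simp add: add.commute)
  hence "phi m ` ((\<lambda>x. (x + g) mod m) ` S) = (\<lambda>x. phi m g + phi m x) ` S"
    by (simp add: image_image)
  also have "\<dots> = (+) (phi m g) ` (phi m ` S)" by (simp add: image_image)
  finally show ?thesis .
qed

lemma sumset_mono: "0 < m \<Longrightarrow> sumset_rho m A r \<subseteq> sumset_rho m A (Suc r)"
proof
  fix x assume m: "0 < m" and x: "x \<in> sumset_rho m A r"
  have "x \<in> Zm m" using sumset_sub[OF m, of A r] x by blast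
  hence "x < m" by (simp add: Zm_def)
  hence "x = (x + 0) mod m \<and> x \<in> sumset_rho m A r \<and> (0::nat) \<in> insert 0 A" using x by simp
  thus "x \<in> sumset_rho m A (Suc r)" by (simp only: sumset_rho.simps) blast
qed

lemma sumset_mono_le: "0 < m \<Longrightarrow> r \<le> r' \<Longrightarrow> sumset_rho m A r \<subseteq> sumset_rho m A r'"
  using lift_Suc_mono_le[of "sumset_rho m A" r r'] sumset_mono by blast

lemma diam_ge_iff:
  assumes m: "0 < m" and r: "0 < \<rho>"
  shows "enat \<rho> \<le> diam m A \<longleftrightarrow> sumset_rho m A (\<rho> - 1) \<noteq> Zm m"
proof
  assume d: "enat \<rho> \<le> diam m A"
  show "sumset_rho m A (\<rho> - 1) \<noteq> Zm m"
  proof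
    assume e: "sumset_rho m A (\<rho> - 1) = Zm m"
    hence "diam m A = enat (LEAST r. sumset_rho m A r = Zm m)" unfolding diam_def by auto
    moreover have "(LEAST r. sumset_rho m A r = Zm m) \<le> \<rho> - 1" using e by (rule Least_le)
    ultimately show False using d r by simp
  qed
next
  assume ne: "sumset_rho m A (\<rho> - 1) \<noteq> Zm m"
  have lt: "sumset_rho m A r \<noteq> Zm m" if "r < \<rho>" for r
  proof
    assume e: "sumset_rho m A r = Zm m"
    have "sumset_rho m A r \<subseteq> sumset_rho m A (\<rho> - 1)" using sumset_mono_le[OF m] that by simp
    thus False using e ne sumset_sub[OF m, of A "\<rho> - 1"] by blast
  qed
  show "enat \<rho> \<le> diam m A"
  proof (cases "\<exists>r. sumset_rho m A r = Zm m")
    case True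
    hence "diam m A = enat (LEAST r. sumset_rho m A r = Zm m)" unfolding diam_def by simp
    moreover have "\<rho> \<le> (LEAST r. sumset_rho m A r = Zm m)"
    proof (rule ccontr)
      assume "\<not> \<rho> \<le> (LEAST r. sumset_rho m A r = Zm m)"
      hence "(LEAST r. sumset_rho m A r = Zm m) < \<rho>" by simp
      moreover have "sumset_rho m A (LEAST r. sumset_rho m A r = Zm m) = Zm m" using LeastI_ex[OF True] .
      ultimately show False using lt by blast
    qed
    ultimately show ?thesis by simp
  next
    case False thus ?thesis unfolding diam_def by simp
  qed
qed

lemma diam_fin_iff: "diam m A < \<infinity> \<longleftrightarrow> (\<exists>r. sumset_rho m A r = Zm m)"
  unfolding diam_def by auto



lemma card_Zm[simp]: "card (Zm m) = m"
  by (simp add: Zm_def)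

lemma zero_in_Zm: "0 < m \<Longrightarrow> 0 \<in> Zm m"
  by (simp add: Zm_def)

lemma core:
  assumes m: "0 < m" and A: "A \<subseteq> Zm m" and h: "0 < h" and ne: "sumset_rho m A h \<noteq> Zm m"
  defines "X \<equiv> phi m ` insert 0 A"
  defines "H \<equiv> stab (rs X h)"
  shows "sg H \<and> finite H \<and> H \<subseteq> phi m ` Zm m \<and> 0 < card H \<and> card H dvd m \<and>
         rs X h \<oplus> H = rs X h \<and> rs X h \<noteq> phi m ` Zm m \<and> X \<subseteq> phi m ` Zm m \<and>
         (\<exists>c. card (X \<oplus> H) = c * card H \<and> 1 \<le> c \<and> h * (c - 1) + 2 \<le> m div card H)"
proof -
  define Z where "Z = phi m ` Zm m"
  have Z: "sg Z" using sg_Z[OF m] Z_def by simp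
  have fZ: "finite Z" using Z_def by (simp add: Zm_def)
  have cZ: "card Z = m" using card_phi[OF m, of "Zm m"] Z_def by simp
  have iA: "insert 0 A \<subseteq> Zm m" using A zero_in_Zm[OF m] by simp
  have XZ: "X \<subseteq> Z" unfolding X_def Z_def by (rule image_mono[OF iA])
  have fX: "finite X" using X_def A finite_subset[OF A] by (simp add: Zm_def)
  have neX: "X \<noteq> {}" using X_def by simp
  have S'eq: "rs X h = phi m ` sumset_rho m A h" using phi_rs[OF m] X_def by simp
  have S'Z: "rs X h \<subseteq> Z" using S'eq sumset_sub[OF m] Z_def by blast
  have S'neZ: "rs X h \<noteq> Z"
    using S'eq phi_eq_iff[OF m sumset_sub[OF m] subset_refl] ne Z_def by simp
  have fS: "finite (rs X h)" using rs_finite[OF fX] .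
  have neS: "rs X h \<noteq> {}" using rs_ne[OF neX] .
  have H: "sg H" using sg_stab H_def by simp
  have fH: "finite H" using stab_finite[OF fS neS] H_def by simp
  have HZ: "H \<subseteq> Z" using stab_sub_sg[OF Z S'Z neS] H_def by simp
  have cH: "0 < card H" using fH H unfolding sg_def by (auto simp: card_gt_0_iff)
  have ZH: "Z \<oplus> H = Z" using sg_closed[OF Z subset_refl HZ] sp_sg_sup[OF H] by blast
  have dvdm: "card H dvd m" using periodic_dvd[OF H fZ ZH] cZ by simp
  have SH: "rs X h \<oplus> H = rs X h" using sp_stab_self H_def by simp
  obtain d where d: "m = card H * d" using dvdm by (auto elim: dvdE)
  have dd: "m div card H = d" using d cH by simp
  obtain c where c: "card (X \<oplus> H) = card H * c"
    using periodic_dvd[OF H sp_finite[OF fX fH] sp_sg_idem[OF H]] by (auto elim: dvdE)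
  obtain e where e: "card (rs X h) = card H * e"
    using periodic_dvd[OF H fS SH] by (auto elim: dvdE)
  have "card (rs X h) < card Z" using psubset_card_mono[OF fZ] S'Z S'neZ by blast
  hence ed: "e < d" using e d cZ cH by simp
  have c1: "1 \<le> c"
  proof -
    have "X \<oplus> H \<noteq> {}" using sp_ne[OF neX] H unfolding sg_def by blast
    hence "0 < card (X \<oplus> H)" using sp_finite[OF fX fH] by (simp add: card_gt_0_iff)
    thus ?thesis using c by (cases c) auto
  qed
  have hf: "h * card (X \<oplus> H) \<le> card (rs X h) + (h - 1) * card H"
    using hfold[OF fX neX h] H_def by simp
  hence "card H * (h * c) \<le> card H * (e + (h - 1))" using c e by (simp add: algebra_simps)
  hence hc: "h * c \<le> e + (h - 1)" using cH by simp
  have "h * (c - 1) + 2 \<le> d"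
  proof -
    obtain c' where c': "c = Suc c'" using c1 by (cases c) auto
    have "h * c = h * c' + h" using c' by simp
    thus ?thesis using hc ed c' h by simp
  qed
  thus ?thesis using H fH HZ cH dvdm SH S'neZ XZ c c1 dd Z_def by (auto simp: mult.commute)
qed



lemma sumset_insert0: "sumset_rho m (insert 0 A) r = sumset_rho m A r"
  by (induction r) simp_all

lemma diam_insert0: "diam m (insert 0 A) = diam m A"
  unfolding diam_def sumset_insert0 by simp

lemma maximal_has0:
  assumes m: "0 < m" and mx: "rho_maximal m \<rho> A"
  shows "0 \<in> A"
proof (rule ccontr)
  assume n0: "0 \<notin> A"
  have "A \<subset> insert 0 A" using n0 by blast
  moreover have "insert 0 A \<subseteq> Zm m" using mx zero_in_Zm[OF m] unfolding rho_maximal_def by simp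
  moreover have "enat \<rho> \<le> diam m (insert 0 A)" using mx diam_insert0 unfolding rho_maximal_def by simp
  ultimately show False using mx unfolding rho_maximal_def by blast
qed

lemma t_upper:
  assumes m: "0 < m" and r: "2 \<le> \<rho>" and A: "A \<subseteq> Zm m" and ap: "aperiodic m A"
    and mx: "rho_maximal m \<rho> A"
  shows "card A \<le> (m - 2) div (\<rho> - 1) + 1"
proof -
  define h where "h = \<rho> - 1"
  have h: "0 < h" using r h_def by simp
  have A0: "0 \<in> A" using maximal_has0[OF m mx] .
  have iA: "insert 0 A = A" using A0 by blast
  have ne: "sumset_rho m A h \<noteq> Zm m"
    using diam_ge_iff[OF m, of \<rho> A] r mx h_def unfolding rho_maximal_def by simp
  define X where "X = phi m ` insert 0 A"
  define H where "H = stab (rs X h)"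
  define Z where "Z = phi m ` Zm m"
  have co: "sg H \<and> finite H \<and> H \<subseteq> Z \<and> 0 < card H \<and> card H dvd m \<and>
         rs X h \<oplus> H = rs X h \<and> rs X h \<noteq> Z \<and> X \<subseteq> Z \<and>
         (\<exists>c. card (X \<oplus> H) = c * card H \<and> 1 \<le> c \<and> h * (c - 1) + 2 \<le> m div card H)"
    using core[OF m A h ne] X_def H_def Z_def by simp
  have H: "sg H" and HZ: "H \<subseteq> Z" and SH: "rs X h \<oplus> H = rs X h" and XZ: "X \<subseteq> Z"
    using co by auto
  have Z: "sg Z" using sg_Z[OF m] Z_def by simp
  have XA: "X = phi m ` A" using X_def iA by simp
  define A' where "A' = {a \<in> Zm m. phi m a \<in> X \<oplus> H}"
  have XHZ: "X \<oplus> H \<subseteq> Z" using sg_closed[OF Z XZ HZ] .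
  have imA': "phi m ` A' = X \<oplus> H"
  proof
    show "phi m ` A' \<subseteq> X \<oplus> H" using A'_def by auto
    show "X \<oplus> H \<subseteq> phi m ` A'"
    proof
      fix y assume y: "y \<in> X \<oplus> H"
      then obtain a where a: "a \<in> Zm m" "y = phi m a" using XHZ Z_def by blast
      thus "y \<in> phi m ` A'" using y A'_def by blast
    qed
  qed
  have AA': "A \<subseteq> A'"
  proof
    fix a assume a: "a \<in> A"
    have "phi m a \<in> X" using XA a by simp
    hence "phi m a \<in> X \<oplus> H" using sp_sg_sup[OF H] by blast
    thus "a \<in> A'" using a A A'_def by blast
  qed
  have A'Z: "A' \<subseteq> Zm m" using A'_def by simp
  have iA': "insert 0 A' = A'" using A0 AA' by blast
  have "phi m ` sumset_rho m A' h = rs (X \<oplus> H) h" using phi_rs[OF m, of A' h] iA' imA' by simp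
  also have "\<dots> = rs X h \<oplus> H" using rs_sg[OF H h] .
  also have "\<dots> = rs X h" using SH .
  finally have e: "phi m ` sumset_rho m A' h = rs X h" .
  have neA': "sumset_rho m A' h \<noteq> Zm m"
  proof
    assume "sumset_rho m A' h = Zm m"
    hence "rs X h = Z" using e Z_def by simp
    thus False using co by simp
  qed
  have "enat \<rho> \<le> diam m A'" using diam_ge_iff[OF m, of \<rho> A'] neA' r h_def by simp
  hence "\<not> A \<subset> A'" using mx A'Z unfolding rho_maximal_def by blast
  hence A'A: "A' = A" using AA' by blast
  hence XHX: "X \<oplus> H = X" using imA' XA by simp
  have "H \<subseteq> {0}"
  proof
    fix y assume y: "y \<in> H"
    then obtain g where g: "g \<in> Zm m" "y = phi m g" using HZ Z_def by blast
    have fX: "finite X" using X_def finite_subset[OF A] by (simp add: Zm_def)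
    have "H \<subseteq> stab X" using periodic_iff[OF H fX] XHX by simp
    hence "(+) y ` X = X" using y unfolding stab_def by blast
    hence "phi m ` ((\<lambda>x. (x + g) mod m) ` A) = phi m ` A" using phi_shift[OF m] g XA by simp
    moreover have "(\<lambda>x. (x + g) mod m) ` A \<subseteq> Zm m" using m by (auto simp: Zm_def)
    ultimately have "(\<lambda>x. (x + g) mod m) ` A = A" using phi_eq_iff[OF m _ A] by blast
    hence "g \<in> period m A" using g unfolding period_def by simp
    hence "g = 0" using ap unfolding aperiodic_def by simp
    thus "y \<in> {0}" using g by simp
  qed
  hence H0: "H = {0}" using H unfolding sg_def by blast
  obtain c where c: "card (X \<oplus> H) = c * card H" "1 \<le> c" "h * (c - 1) + 2 \<le> m div card H"
    using co by blast
  have "X \<oplus> H = X" using H0 by simp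
  hence cX: "c = card A" using c H0 XA card_phi[OF m A] by simp
  have "h * (c - 1) \<le> m - 2" using c H0 by simp
  hence "c - 1 \<le> (m - 2) div h" using h by (simp add: less_eq_div_iff_mult_less_eq mult.commute)
  thus ?thesis using cX h_def c by simp
qed

lemma s_upper:
  assumes m: "0 < m" and r: "2 \<le> \<rho>" and A: "A \<subseteq> Zm m"
    and d1: "enat \<rho> \<le> diam m A" and d2: "diam m A < \<infinity>"
  shows "\<exists>d. d dvd m \<and> \<rho> + 1 \<le> d \<and> card A \<le> (m div d) * ((d - 2) div (\<rho> - 1) + 1)"
proof -
  define h where "h = \<rho> - 1"
  have h: "0 < h" using r h_def by simp
  have ne: "sumset_rho m A h \<noteq> Zm m"
    using diam_ge_iff[OF m, of \<rho> A] r d1 h_def by simp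
  define X where "X = phi m ` insert 0 A"
  define H where "H = stab (rs X h)"
  define Z where "Z = phi m ` Zm m"
  have co: "sg H \<and> finite H \<and> H \<subseteq> Z \<and> 0 < card H \<and> card H dvd m \<and>
         rs X h \<oplus> H = rs X h \<and> rs X h \<noteq> Z \<and> X \<subseteq> Z \<and>
         (\<exists>c. card (X \<oplus> H) = c * card H \<and> 1 \<le> c \<and> h * (c - 1) + 2 \<le> m div card H)"
    using core[OF m A h ne] X_def H_def Z_def by simp
  have H: "sg H" and HZ: "H \<subseteq> Z" and SH: "rs X h \<oplus> H = rs X h" and XZ: "X \<subseteq> Z"
    and fH: "finite H" and cH: "0 < card H" and dvdm: "card H dvd m" and SZ: "rs X h \<noteq> Z"
    using co by auto
  obtain c where c: "card (X \<oplus> H) = c * card H" "1 \<le> c" "h * (c - 1) + 2 \<le> m div card H"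
    using co by blast
  define d where "d = m div card H"
  have md: "m = d * card H" using dvdm d_def by simp
  have fX: "finite X" using X_def finite_subset[OF A] by (simp add: Zm_def)
  have X0: "0 \<in> X" using X_def by simp
  have c2: "2 \<le> c"
  proof (rule ccontr)
    assume "\<not> 2 \<le> c"
    hence c1: "c = 1" using c by simp
    have HXH: "H \<subseteq> X \<oplus> H" using X0 by (auto intro: sp_I[of 0 X _ H, simplified])
    have "card (X \<oplus> H) = card H" using c c1 by simp
    hence "X \<oplus> H = H" using card_subset_eq[OF fH] HXH by (metis card_subset_eq sp_finite fX fH)
    hence XH: "X \<subseteq> H" using sp_sg_sup[OF H, of X] by simp
    have rsH: "rs X r \<subseteq> H" for r
    proof (induction r)
      case 0 thus ?case using H unfolding sg_def by simp
    next
      case (Suc r) thus ?case using sg_closed[OF H Suc XH] by simp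
    qed
    have HS: "H \<subseteq> rs X h"
    proof -
      have "0 \<in> rs X h" using rsH X0 
      proof -
        have "0 \<in> rs X r" for r by (induction r) (use X0 in \<open>auto intro: sp_I[of 0 _ 0 X, simplified]\<close>)
        thus ?thesis by simp
      qed
      hence "H \<subseteq> rs X h \<oplus> H" by (auto intro: sp_I[of 0 _ _ H, simplified])
      thus ?thesis using SH by simp
    qed
    have HnZ: "H \<noteq> Z" using HS SZ rsH[of h] by blast
    have "sumset_rho m A r \<noteq> Zm m" for r
    proof
      assume "sumset_rho m A r = Zm m"
      hence "rs X r = Z" using phi_rs[OF m, of A r] X_def Z_def by simp
      thus False using rsH[of r] HZ HnZ by blast
    qed
    thus False using d2 diam_fin_iff by blast
  qed
  have dge: "\<rho> + 1 \<le> d"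
  proof -
    have "1 \<le> c - 1" using c2 by simp
    hence a: "h * 1 \<le> h * (c - 1)" by (rule mult_le_mono2)
    have b: "h * (c - 1) + 2 \<le> d" using c(3) d_def by simp
    have "h + 2 \<le> d" using a b by linarith
    thus ?thesis using h_def r by linarith
  qed
  have ddvd: "d dvd m" using md by simp
  have cHd: "card H = m div d" using md dge by simp
  have "card A \<le> card (insert 0 A)" using finite_subset[OF A] by (simp add: Zm_def card_mono subset_insertI)
  also have "\<dots> = card X" using card_phi[OF m, of "insert 0 A"] A zero_in_Zm[OF m] X_def by simp
  also have "\<dots> \<le> card (X \<oplus> H)" using card_mono[OF sp_finite[OF fX fH] sp_sg_sup[OF H]] .
  also have "\<dots> = c * card H" using c by simp
  finally have cA: "card A \<le> c * card H" .
  have "h * (c - 1) \<le> d - 2" using c(3) d_def by simp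
  hence "c - 1 \<le> (d - 2) div h" using h by (simp add: less_eq_div_iff_mult_less_eq mult.commute)
  hence "c \<le> (d - 2) div (\<rho> - 1) + 1" using h_def c by simp
  hence "c * card H \<le> ((d - 2) div (\<rho> - 1) + 1) * card H" by (rule mult_le_mono1)
  hence "c * card H \<le> (m div d) * ((d - 2) div (\<rho> - 1) + 1)" using cHd by (simp only: mult.commute)
  thus ?thesis using cA ddvd dge by (meson order_trans)
qed



lemma delta_bound:
  assumes m: "0 < m" and H: "sg H" and fH: "finite H" and d1: "1 \<le> \<delta>" and dH: "phi m \<delta> \<in> H"
  shows "m \<le> card H * \<delta>"
proof -
  define q where "q = (m - 1) div \<delta> + 1"
  define M where "M = (\<lambda>l. l * \<delta>) ` {..<q}"
  have inH: "phi m (l * \<delta>) \<in> H" for l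
  proof (induction l)
    case 0 thus ?case using H unfolding sg_def by simp
  next
    case (Suc l)
    have "phi m (Suc l * \<delta>) = phi m (l * \<delta>) + phi m \<delta>" using phi_add[of m "l * \<delta>" \<delta>] by (simp add: add.commute)
    thus ?case using Suc dH H unfolding sg_def by simp
  qed
  have MZ: "M \<subseteq> Zm m"
  proof
    fix x assume "x \<in> M"
    then obtain l where l: "l < q" "x = l * \<delta>" using M_def by blast
    have "l \<le> (m - 1) div \<delta>" using l q_def by simp
    hence "l * \<delta> \<le> (m - 1) div \<delta> * \<delta>" by (rule mult_le_mono1)
    also have "\<dots> \<le> m - 1" using div_mult_mod_eq[of "m - 1" \<delta>] by linarith
    finally show "x \<in> Zm m" using l m by (simp add: Zm_def)
  qed
  have cM: "card M = q"
  proof -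
    have "inj_on (\<lambda>l. l * \<delta>) {..<q}" using d1 by (auto simp: inj_on_def)
    thus ?thesis using M_def card_image by fastforce
  qed
  have "phi m ` M \<subseteq> H" using inH M_def by auto
  hence "card (phi m ` M) \<le> card H" using card_mono[OF fH] by blast
  hence qH: "q \<le> card H" using card_phi[OF m MZ] cM by simp
  have "m - 1 < q * \<delta>"
  proof -
    have e: "(m - 1) div \<delta> * \<delta> + (m - 1) mod \<delta> = m - 1" by (rule div_mult_mod_eq)
    moreover have "(m - 1) mod \<delta> < \<delta>" using d1 by simp
    moreover have "q * \<delta> = (m - 1) div \<delta> * \<delta> + \<delta>" using q_def by (simp add: algebra_simps)
    ultimately show ?thesis by linarith
  qed
  hence "m \<le> q * \<delta>" by simp
  also have "\<dots> \<le> card H * \<delta>" using qH by (rule mult_le_mono1)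
  finally show ?thesis .
qed

lemma coset_count:
  fixes H P Y :: "'a::ab_group_add set"
  assumes H: "sg H" and fH: "finite H" and fP: "finite P" and PH: "P \<oplus> H = P" and YP: "Y \<subseteq> P"
    and dist: "\<And>y y'. y \<in> Y \<Longrightarrow> y' \<in> Y \<Longrightarrow> y \<noteq> y' \<Longrightarrow> y' - y \<notin> H"
  shows "card Y * card H \<le> card P"
proof -
  have fY: "finite Y" using finite_subset[OF YP fP] .
  have disj: "\<forall>i\<in>Y. \<forall>j\<in>Y. i \<noteq> j \<longrightarrow> cs i H \<inter> cs j H = {}"
  proof (intro ballI impI)
    fix i j assume ij: "i \<in> Y" "j \<in> Y" "i \<noteq> j"
    have "j \<notin> cs i H" using dist[OF ij] cs_iff[OF H] by blast
    hence "cs i H \<noteq> cs j H" using cs_self[OF H, of j] by blast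
    thus "cs i H \<inter> cs j H = {}" using cs_disj[OF H] by blast
  qed
  have fin: "\<forall>i\<in>Y. finite (cs i H)" using fH unfolding cs_def by simp
  have "card (\<Union> ((\<lambda>i. cs i H) ` Y)) = (\<Sum>i\<in>Y. card (cs i H))"
    using card_UN_disjoint[OF fY fin disj] .
  also have "\<dots> = (\<Sum>i\<in>Y. card H)" by (rule sum.cong) (simp_all add: cs_card)
  also have "\<dots> = card Y * card H" by simp
  finally have e: "card (\<Union> ((\<lambda>i. cs i H) ` Y)) = card Y * card H" .
  have "\<Union> ((\<lambda>i. cs i H) ` Y) \<subseteq> P" using periodic_cs[OF H PH] YP by blast
  thus ?thesis using e card_mono[OF fP] by metis
qed

lemma interval_sumset: "0 < m \<Longrightarrow> sumset_rho m {0..k} r \<subseteq> {x. x \<le> r * k}"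
proof (induction r)
  case 0 thus ?case by simp
next
  case (Suc r)
  show ?case
  proof
    fix z assume "z \<in> sumset_rho m {0..k} (Suc r)"
    then obtain x a where xa: "z = (x + a) mod m" "x \<in> sumset_rho m {0..k} r" "a \<in> insert 0 {0..k}" by auto
    have "x \<le> r * k" using xa(2) Suc by blast
    moreover have "a \<le> k" using xa(3) by auto
    moreover have "z \<le> x + a" using xa(1) by simp
    ultimately show "z \<in> {x. x \<le> Suc r * k}" by simp
  qed
qed

lemma one_gen_sumset:
  assumes m: "1 < m" and one: "1 \<in> A"
  shows "{0..min r (m - 1)} \<subseteq> sumset_rho m A r"
proof (induction r)
  case 0 thus ?case using m by simp
next
  case (Suc r)
  show ?case
  proof
    fix n assume n: "n \<in> {0..min (Suc r) (m - 1)}"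
    show "n \<in> sumset_rho m A (Suc r)"
    proof (cases "n \<le> r")
      case True
      hence "n \<in> sumset_rho m A r" using Suc n by auto
      thus ?thesis using sumset_mono[of m A r] m by auto
    next
      case False
      hence nr: "n = Suc r" and rm: "r < m - 1" using n by auto
      have "r \<in> sumset_rho m A r" using Suc rm by auto
      moreover have "(r + 1) mod m = n" using nr rm by simp
      ultimately have "n = (r + 1) mod m \<and> r \<in> sumset_rho m A r \<and> (1::nat) \<in> insert 0 A" using one by simp
      thus ?thesis by (simp only: sumset_rho.simps) blast
    qed
  qed
qed

lemma one_fin_diam:
  assumes m: "1 < m" and one: "1 \<in> A" and A: "A \<subseteq> Zm m"
  shows "diam m A < \<infinity>"
proof -
  have "Zm m \<subseteq> sumset_rho m A (m - 1)" using one_gen_sumset[OF m one, of "m - 1"] m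
    by (auto simp: Zm_def)
  hence "sumset_rho m A (m - 1) = Zm m" using sumset_sub[of m A "m - 1"] m by auto
  thus ?thesis using diam_fin_iff by blast
qed



lemma shift_cancel:
  fixes a b g m :: nat
  assumes m: "0 < m" and a: "a < m" and b: "b < m" and e: "(a + g) mod m = (b + g) mod m"
  shows "a = b"
proof -
  have "phi m ((a + g) mod m) = phi m ((b + g) mod m)" using e by simp
  hence "phi m a + phi m g = phi m b + phi m g" using phi_mod[OF m] phi_add by simp
  hence "phi m a = phi m b" by simp
  thus ?thesis using phi_inj[OF m a b] by simp
qed

lemma interval_props:
  assumes r: "2 \<le> \<rho>" and m: "\<rho> + 1 \<le> m"
  defines "k \<equiv> (m - 2) div (\<rho> - 1)"
  shows "{0..k} \<subseteq> Zm m \<and> aperiodic m {0..k} \<and> generates m {0..k} \<and> rho_maximal m \<rho> {0..k}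
         \<and> card {0..k} = k + 1"
proof -
  define h where "h = \<rho> - 1"
  define I where "I = {0..k}"
  have h: "1 \<le> h" using r h_def by simp
  have m0: "0 < m" using m by simp
  have kdef: "k = (m - 2) div h" using k_def h_def by simp
  have k1: "1 \<le> k" using kdef h m h_def by (simp add: less_eq_div_iff_mult_less_eq)
  have hk: "h * k \<le> m - 2"
    using kdef div_mult_mod_eq[of "m - 2" h] by (simp add: mult.commute)
  have hk2: "m - 2 < (k + 1) * h"
  proof -
    have e: "(m - 2) div h * h + (m - 2) mod h = m - 2" by (rule div_mult_mod_eq)
    moreover have "(m - 2) mod h < h" using h by simp
    moreover have "(k + 1) * h = (m - 2) div h * h + h" using kdef by (simp add: algebra_simps)
    ultimately show ?thesis by linarith
  qed
  have km: "k \<le> m - 2" using hk h by (metis dual_order.trans mult_le_mono1 mult_1 mult.commute)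
  have IZ: "I \<subseteq> Zm m" using km m I_def by (auto simp: Zm_def)
  have cI: "card I = k + 1" using I_def by simp
  have ap: "aperiodic m I"
    unfolding aperiodic_def
  proof
    show "period m I \<subseteq> {0}"
    proof
      fix g assume g: "g \<in> period m I"
      hence gZ: "g < m" and im: "(\<lambda>x. (x + g) mod m) ` I = I" unfolding period_def by (auto simp: Zm_def)
      have "(0 + g) mod m \<in> (\<lambda>x. (x + g) mod m) ` I" using I_def by (intro imageI) simp
      hence "(0 + g) mod m \<in> I" using im by simp
      hence gk: "g \<le> k" using gZ I_def by simp
      show "g \<in> {0}"
      proof (rule ccontr)
        assume "g \<notin> {0}"
        hence g1: "1 \<le> g" by simp
        have e1: "m - 1 + g = (g - 1) + m" using g1 m0 by simp
        have "((g - 1) + m) mod m = g - 1" using gZ by simp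
        hence "(m - 1 + g) mod m = g - 1" by (simp only: e1)
        moreover have "g - 1 \<in> I" using gk I_def by simp
        ultimately have "(m - 1 + g) mod m \<in> (\<lambda>x. (x + g) mod m) ` I" using im by simp
        then obtain i where i: "i \<in> I" "(m - 1 + g) mod m = (i + g) mod m" by blast
        have "i < m" using i IZ by (auto simp: Zm_def)
        hence "m - 1 = i" using shift_cancel[OF m0 _ _ i(2)] m0 by simp
        thus False using i km I_def m r by simp
      qed
    qed
    show "{0} \<subseteq> period m I"
    proof -
      have "(\<lambda>x. (x + 0) mod m) ` I = I"
      proof -
        have "(\<lambda>x. (x + 0) mod m) ` I = (\<lambda>x. x) ` I"
          using IZ by (intro image_cong) (auto simp: Zm_def)
        thus ?thesis by simp
      qed
      thus ?thesis unfolding period_def using m0 by (simp add: Zm_def)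
    qed
  qed
  have gen: "generates m I"
    unfolding generates_def
  proof (intro conjI allI impI)
    show "I \<subseteq> Zm m" by (rule IZ)
    fix H assume H: "H \<subseteq> Zm m \<and> 0 \<in> H \<and> (\<forall>x\<in>H. \<forall>y\<in>H. (x + y) mod m \<in> H) \<and> (\<forall>x\<in>H. (m - x) mod m \<in> H) \<and> I \<subseteq> H"
    have one: "1 \<in> H" using H k1 I_def by auto
    have "n \<in> H" if "n < m" for n
      using that
    proof (induction n)
      case 0 thus ?case using H by simp
    next
      case (Suc n)
      hence "n \<in> H" by simp
      hence "(n + 1) mod m \<in> H" using H one by blast
      thus ?case using Suc.prems by simp
    qed
    thus "H = Zm m" using H by (auto simp: Zm_def)
  qed
  have dI: "enat \<rho> \<le> diam m I"
  proof -
    have "sumset_rho m I h \<subseteq> {x. x \<le> h * k}" using interval_sumset[OF m0] I_def by blast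
    moreover have "\<not> m - 1 \<le> h * k" using hk m r by simp
    ultimately have "m - 1 \<notin> sumset_rho m I h" by blast
    moreover have "m - 1 \<in> Zm m" using m0 by (simp add: Zm_def)
    ultimately have "sumset_rho m I h \<noteq> Zm m" by blast
    thus ?thesis using diam_ge_iff[OF m0, of \<rho> I] r h_def by simp
  qed
  have mx: "\<not> enat \<rho> \<le> diam m B" if IB: "I \<subset> B" and BZ: "B \<subseteq> Zm m" for B
  proof
    assume dB: "enat \<rho> \<le> diam m B"
    have B0: "0 \<in> B" using IB I_def by auto
    have ne: "sumset_rho m B h \<noteq> Zm m" using diam_ge_iff[OF m0, of \<rho> B] dB r h_def by simp
    define X where "X = phi m ` insert 0 B"
    define H where "H = stab (rs X h)"
    have co: "sg H \<and> finite H \<and> H \<subseteq> phi m ` Zm m \<and> 0 < card H \<and> card H dvd m \<and>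
         rs X h \<oplus> H = rs X h \<and> rs X h \<noteq> phi m ` Zm m \<and> X \<subseteq> phi m ` Zm m \<and>
         (\<exists>c. card (X \<oplus> H) = c * card H \<and> 1 \<le> c \<and> h * (c - 1) + 2 \<le> m div card H)"
      using core[OF m0 BZ _ ne] h X_def H_def by simp
    have H: "sg H" and fH: "finite H" and cH: "0 < card H" and dvdm: "card H dvd m"
      using co by auto
    obtain c where c: "card (X \<oplus> H) = c * card H" "1 \<le> c" "h * (c - 1) + 2 \<le> m div card H"
      using co by blast
    define d where "d = m div card H"
    have md: "m = d * card H" using dvdm d_def by simp
    have XB: "X = phi m ` B" using X_def B0 by (simp add: insert_absorb)
    have fB: "finite B" using finite_subset[OF BZ] by (simp add: Zm_def)
    have fX: "finite X" using XB fB by simp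
    define n where "n = min (k + 1) d"
    define Y where "Y = phi m ` {0..<n}"
    have nZ: "{0..<n} \<subseteq> Zm m" using n_def km m0 by (auto simp: Zm_def)
    have nB: "{0..<n} \<subseteq> B" using IB I_def n_def by auto
    have cY: "card Y = n" using card_phi[OF m0 nZ] Y_def by simp
    have YX: "Y \<subseteq> X \<oplus> H" using XB Y_def nB sp_sg_sup[OF H] by blast
    have noH: "phi m \<delta> \<notin> H" if "1 \<le> \<delta>" "\<delta> < d" for \<delta>
    proof
      assume "phi m \<delta> \<in> H"
      hence "m \<le> card H * \<delta>" using delta_bound[OF m0 H fH that(1)] by simp
      hence "d * card H \<le> \<delta> * card H" using md by (simp add: mult.commute)
      hence "d \<le> \<delta>" using cH by simp
      thus False using that(2) by simp
    qed
    have dist: "y' - y \<notin> H" if yy: "y \<in> Y" "y' \<in> Y" "y \<noteq> y'" for y y'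
    proof -
      obtain i j where ij: "i < n" "j < n" "y = phi m i" "y' = phi m j" using yy Y_def by auto
      have "i \<noteq> j" using ij yy by auto
      show ?thesis
      proof (cases "i < j")
        case True
        have "phi m j = phi m i + phi m (j - i)" using phi_add[of m i "j - i"] True by simp
        hence "y' - y = phi m (j - i)" using ij by (simp add: algebra_simps)
        moreover have "j - i < d" "1 \<le> j - i" using True ij n_def by auto
        ultimately show ?thesis using noH by simp
      next
        case False
        hence ji: "j < i" using \<open>i \<noteq> j\<close> by simp
        have "phi m i = phi m j + phi m (i - j)" using phi_add[of m j "i - j"] ji by simp
        hence e: "y' - y = - phi m (i - j)" using ij by (simp add: algebra_simps)
        have "i - j < d" "1 \<le> i - j" using ji ij n_def by auto
        hence "phi m (i - j) \<notin> H" using noH by simp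
        thus ?thesis using e H unfolding sg_def by (metis minus_minus)
      qed
    qed
    have "n * card H \<le> card (X \<oplus> H)"
      using coset_count[OF H fH sp_finite[OF fX fH] sp_sg_idem[OF H] YX dist] cY by simp
    hence nc: "n \<le> c" using c cH by simp
    have "h * (c - 1) + 2 \<le> d" using c d_def by simp
    moreover have "1 * (c - 1) \<le> h * (c - 1)" using h by (rule mult_le_mono1)
    ultimately have cd: "c < d" using c(2) by linarith
    hence "n = k + 1" using nc n_def by auto
    hence kc: "k + 1 \<le> c" using nc by simp
    have hkd: "h * k + 2 \<le> d"
    proof -
      have "k \<le> c - 1" using kc by simp
      hence "h * k \<le> h * (c - 1)" by (rule mult_le_mono2)
      thus ?thesis using c(3) d_def by linarith
    qed
    have H1: "card H = 1"
    proof (rule ccontr)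
      assume "card H \<noteq> 1"
      hence "2 \<le> card H" using cH by simp
      hence "d * 2 \<le> d * card H" by (rule mult_le_mono2)
      hence a: "2 * d \<le> m" using md by simp
      have b: "h * 1 \<le> h * k" using k1 by (rule mult_le_mono2)
      have e: "(k + 1) * h = h * k + h" by (simp add: algebra_simps)
      show False using a b e hkd hk2 by linarith
    qed
    then obtain x where Hx: "H = {x}" using card_1_singletonE by blast
    have "0 \<in> H" using H unfolding sg_def by blast
    hence H0: "H = {0}" using Hx by simp
    have "card (X \<oplus> H) = card B" using H0 XB card_phi[OF m0 BZ] by simp
    hence cB: "c = card B" using c H1 by simp
    have "h * (card B - 1) \<le> m - 2" using c cB H1 by simp
    hence "card B - 1 \<le> k" using h kdef by (simp add: less_eq_div_iff_mult_less_eq mult.commute)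
    moreover have "k + 1 < card B" using psubset_card_mono[OF fB IB] cI by simp
    ultimately show False by simp
  qed
  have rm: "rho_maximal m \<rho> I" unfolding rho_maximal_def using IZ dI mx by blast
  show ?thesis using IZ ap gen rm cI I_def by simp
qed



lemma Ad_props:
  assumes r: "2 \<le> \<rho>" and m: "\<rho> + 1 \<le> m" and dm: "d dvd m" and dr: "\<rho> + 1 \<le> d"
  defines "kd \<equiv> (d - 2) div (\<rho> - 1)"
  defines "A \<equiv> {x \<in> Zm m. x mod d \<le> kd}"
  shows "A \<subseteq> Zm m \<and> enat \<rho> \<le> diam m A \<and> diam m A < \<infinity> \<and> card A = (m div d) * (kd + 1)"
proof -
  define h where "h = \<rho> - 1"
  define q where "q = m div d"
  have h: "1 \<le> h" using r h_def by simp
  have m0: "0 < m" using m by simp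
  have d2: "2 \<le> d" using dr r by simp
  have mq: "m = d * q" using dm q_def by simp
  have kdh: "kd = (d - 2) div h" using kd_def h_def by simp
  have k1: "1 \<le> kd" using kdh h dr h_def by (simp add: less_eq_div_iff_mult_less_eq)
  have hk: "h * kd \<le> d - 2"
    using kdh div_mult_mod_eq[of "d - 2" h] by (simp add: mult.commute)
  have kdd: "kd < d"
  proof -
    have "kd \<le> h * kd" using h by simp
    thus ?thesis using hk d2 by linarith
  qed
  have AZ: "A \<subseteq> Zm m" using A_def by simp
  have cA: "card A = q * (kd + 1)"
  proof -
    define f where "f = (\<lambda>(i, j). d * i + j)"
    have inj: "inj_on f ({..<q} \<times> {..kd})"
    proof (rule inj_onI)
      fix x y assume x: "x \<in> {..<q} \<times> {..kd}" and y: "y \<in> {..<q} \<times> {..kd}" and e: "f x = f y"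
      obtain i j i' j' where xy: "x = (i, j)" "y = (i', j')" by (cases x, cases y)
      have jj: "j < d" "j' < d" using x y xy kdd by auto
      have e2: "d * i + j = d * i' + j'" using e xy f_def by simp
      have "(d * i + j) mod d = j" "(d * i' + j') mod d = j'" using jj by simp_all
      hence "j = j'" using e2 by simp
      moreover have "(d * i + j) div d = i" "(d * i' + j') div d = i'" using jj by simp_all
      hence "i = i'" using e2 by simp
      ultimately show "x = y" using xy by simp
    qed
    have im: "f ` ({..<q} \<times> {..kd}) = A"
    proof
      show "f ` ({..<q} \<times> {..kd}) \<subseteq> A"
      proof
        fix z assume "z \<in> f ` ({..<q} \<times> {..kd})"
        then obtain i j where ij: "i < q" "j \<le> kd" "z = d * i + j" using f_def by auto
        have "Suc i \<le> q" using ij by simp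
        hence "d * Suc i \<le> d * q" by (rule mult_le_mono2)
        hence "d * i + d \<le> m" using mq by simp
        hence "z < m" using ij kdd by linarith
        moreover have "z mod d = j" using ij kdd by simp
        ultimately show "z \<in> A" using A_def ij by (simp add: Zm_def)
      qed
      show "A \<subseteq> f ` ({..<q} \<times> {..kd})"
      proof
        fix z assume z: "z \<in> A"
        hence zm: "z < m" and zk: "z mod d \<le> kd" using A_def by (auto simp: Zm_def)
        have "z div d < q" using zm mq d2 by (simp add: div_less_iff_less_mult mult.commute)
        moreover have "z = f (z div d, z mod d)" using f_def by simp
        ultimately show "z \<in> f ` ({..<q} \<times> {..kd})" using zk by blast
      qed
    qed
    have "card A = card ({..<q} \<times> {..kd})" using card_image[OF inj] im by simp
    thus ?thesis by simp
  qed
  have sub: "sumset_rho m A r \<subseteq> {x. x mod d \<le> r * kd}" for r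
  proof (induction r)
    case 0 thus ?case by simp
  next
    case (Suc r)
    show ?case
    proof
      fix z assume "z \<in> sumset_rho m A (Suc r)"
      then obtain x a where xa: "z = (x + a) mod m" "x \<in> sumset_rho m A r" "a \<in> insert 0 A" by auto
      have xr: "x mod d \<le> r * kd" using xa(2) Suc by blast
      have ak: "a mod d \<le> kd" using xa(3) A_def by auto
      have "z mod d = (x + a) mod d" using xa(1) dm by (simp add: mod_mod_cancel)
      also have "\<dots> = (x mod d + a mod d) mod d" by (simp add: mod_add_eq)
      also have "\<dots> \<le> x mod d + a mod d" by (rule mod_less_eq_dividend)
      finally show "z \<in> {x. x mod d \<le> Suc r * kd}" using xr ak by simp
    qed
  qed
  have dA: "enat \<rho> \<le> diam m A"
  proof -
    have dmle: "d \<le> m" using dvd_imp_le[OF dm m0] .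
    have "(d - 1) mod d = d - 1" using d2 by simp
    hence "d - 1 \<notin> sumset_rho m A h" using sub[of h] hk d2 by auto
    moreover have "d - 1 \<in> Zm m" using dmle d2 by (simp add: Zm_def)
    ultimately have "sumset_rho m A h \<noteq> Zm m" by blast
    thus ?thesis using diam_ge_iff[OF m0, of \<rho> A] r h_def by simp
  qed
  have fA: "diam m A < \<infinity>"
  proof -
    have "1 \<in> A" using A_def d2 k1 m r by (simp add: Zm_def)
    moreover have "1 < m" using m r by simp
    ultimately show ?thesis using one_fin_diam AZ by blast
  qed
  show ?thesis using AZ dA fA cA q_def by simp
qed

theorem theorem2p5:
  fixes m \<rho> :: nat
  assumes "2 \<le> \<rho>" and "\<rho> + 1 \<le> m"
  shows "t_rho \<rho> m = (m - 2) div (\<rho> - 1) + 1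
       \<and> s_rho \<rho> m = Max {(m div d) * ((d - 2) div (\<rho> - 1) + 1) | d. d dvd m \<and> \<rho> + 1 \<le> d}"
proof
  have r: "2 \<le> \<rho>" and mm: "\<rho> + 1 \<le> m" using assms by auto
  have m0: "0 < m" using mm by simp
  define k where "k = (m - 2) div (\<rho> - 1)"
  define TS where "TS = {card A | A. A \<subseteq> Zm m \<and> aperiodic m A \<and> rho_maximal m \<rho> A \<and> generates m A}"
  have ip: "{0..k} \<subseteq> Zm m \<and> aperiodic m {0..k} \<and> generates m {0..k} \<and> rho_maximal m \<rho> {0..k} \<and> card {0..k} = k + 1"
    using interval_props[OF r mm] k_def by simp
  hence "k + 1 = card {0..k} \<and> {0..k} \<subseteq> Zm m \<and> aperiodic m {0..k} \<and> rho_maximal m \<rho> {0..k} \<and> generates m {0..k}"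
    by simp
  hence kin: "k + 1 \<in> TS" unfolding TS_def by blast
  have kub: "y \<le> k + 1" if "y \<in> insert 0 TS" for y
    using that t_upper[OF m0 r] k_def TS_def by auto
  have fT: "finite (insert 0 TS)" using kub by (meson finite_atMost finite_subset subsetI atMost_iff)
  have "Max (insert 0 TS) = k + 1"
    by (rule Max_eqI[OF fT]) (use kub kin in auto)
  thus "t_rho \<rho> m = (m - 2) div (\<rho> - 1) + 1" unfolding t_rho_def TS_def k_def by simp
next
  have r: "2 \<le> \<rho>" and mm: "\<rho> + 1 \<le> m" using assms by auto
  have m0: "0 < m" using mm by simp
  define f where "f = (\<lambda>d. (m div d) * ((d - 2) div (\<rho> - 1) + 1))"
  define DD where "DD = {d. d dvd m \<and> \<rho> + 1 \<le> d}"
  define DS where "DS = {(m div d) * ((d - 2) div (\<rho> - 1) + 1) | d. d dvd m \<and> \<rho> + 1 \<le> d}"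
  define SS where "SS = {card A | A. A \<subseteq> Zm m \<and> enat \<rho> \<le> diam m A \<and> diam m A < \<infinity>}"
  have DSim: "DS = f ` DD" unfolding DS_def DD_def f_def by blast
  have fDD: "finite DD"
  proof -
    have "DD \<subseteq> {..m}" using DD_def dvd_imp_le[OF _ m0] by auto
    thus ?thesis using finite_subset by blast
  qed
  have fDS: "finite DS" using DSim fDD by simp
  have neDS: "DS \<noteq> {}" using DSim DD_def mm by auto
  define M where "M = Max DS"
  have MDS: "M \<in> DS" using Max_in[OF fDS neDS] M_def by simp
  then obtain d0 where d0: "d0 dvd m" "\<rho> + 1 \<le> d0" "M = f d0" using DS_def f_def by auto
  have MSS: "M \<in> SS"
  proof -
    define A where "A = {x \<in> Zm m. x mod d0 \<le> (d0 - 2) div (\<rho> - 1)}"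
    have "A \<subseteq> Zm m \<and> enat \<rho> \<le> diam m A \<and> diam m A < \<infinity> \<and> card A = (m div d0) * ((d0 - 2) div (\<rho> - 1) + 1)"
      using Ad_props[OF r mm d0(1) d0(2)] A_def by simp
    hence "M = card A \<and> A \<subseteq> Zm m \<and> enat \<rho> \<le> diam m A \<and> diam m A < \<infinity>"
      using d0 f_def by simp
    thus ?thesis unfolding SS_def by blast
  qed
  have ub: "y \<le> M" if yS: "y \<in> insert 0 SS" for y
  proof (cases "y = 0")
    case True thus ?thesis by simp
  next
    case False
    then obtain A where A: "y = card A" "A \<subseteq> Zm m" "enat \<rho> \<le> diam m A" "diam m A < \<infinity>"
      using yS SS_def by auto
    obtain d where d: "d dvd m" "\<rho> + 1 \<le> d" "card A \<le> f d"
      using s_upper[OF m0 r A(2) A(3) A(4)] f_def by blast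
    have "f d \<in> DS" using d DSim DD_def by auto
    hence "f d \<le> M" using Max_ge[OF fDS] M_def by simp
    thus ?thesis using d A by simp
  qed
  have fS: "finite (insert 0 SS)" using ub by (meson finite_atMost finite_subset subsetI atMost_iff)
  have "Max (insert 0 SS) = M"
    by (rule Max_eqI[OF fS]) (use ub MSS in auto)
  thus "s_rho \<rho> m = Max {(m div d) * ((d - 2) div (\<rho> - 1) + 1) | d. d dvd m \<and> \<rho> + 1 \<le> d}"
    unfolding s_rho_def SS_def M_def DS_def by simp
qed


end
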